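(* Let $c>0$, $0<\alpha\le1$, and $w(x)=\exp(c|x|^\alpha)$ for $x\in\mathbb{R}^n$. If $Y(\mathbb{R}^n)$ is a translation-invariant Banach function space, then there exist non-trivial (i.e. non-constant) Fourier multipliers in $\mathcal{M}_{Y(\mathbb{R}^n,w)}$.
   Context: Banach function spaces: let $\mathfrak{M}^+(\mathbb{R}^n)$ be the set of measurable functions with values in $[0,\infty]$. A Banach function norm $\rho:\mathfrak{M}^+\to[0,\infty]$ satisfies, for all $f,g,f_j\in\mathfrak{M}^+$, $a\ge0$, measurable $E$: (A1) $\rho(f)=0\iff f=0$ a.e., $\rho(af)=a\rho(f)$, $\rho(f+g)\le\rho(f)+\rho(g)$; (A2) $0\le g\le f$ a.e. implies $\rho(g)\le\rho(f)$; (A3) $0\le f_j\uparrow f$ a.e. implies $\rho(f_j)\uparrow\rho(f)$; (A4) $|E|<\infty$ implies $\rho(\chi_E)<\infty$; (A5) $|E|<\infty$ implies $\int_Ef\le C_E\rho(f)$ with $C_E$ independent of $f$. $Y(\mathbb{R}^n)$ is the set of measurable complex $f$ with $\rho(|f|)<\infty$, $\|f\|_Y=\rho(|f|)$; translation-invariant means $\|u(\cdot-y)\|_Y=\|u\|_Y$ for all $y$, $u\in Y$. $Y(\mathbb{R}^n,w)=\{f: fw\in Y\}$ with norm $\|fw\|_Y$. Fourier transform: $(Fu)(\xi)=\int u(x)e^{-ix\xi}dx$, extended to $S'(\mathbb{R}^n)$. $\mathcal{M}_{Z}$ is the set of $a\in S'(\mathbb{R}^n)$ with $\sup\{\|F^{-1}aFu\|_{Z}/\|u\|_{Z}: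 u\in (S(\mathbb{R}^n)\cap Z)\setminus\{0\}\}<\infty$. *)

theory Defs
  imports "HOL-Analysis.Analysis"
begin

text \<open>A Banach function norm acts on M^+, the Lebesgue measurable functions with
values in [0,\<infinity>]; the axioms are only imposed on such functions.\<close>

definition banach_function_norm :: "((real^'n::finite \<Rightarrow> ennreal) \<Rightarrow> ennreal) \<Rightarrow> bool" where
  "banach_function_norm \<rho> \<longleftrightarrow>
     \<comment> \<open>(A1)\<close>
     (\<forall>f \<in> borel_measurable lebesgue. \<rho> f = 0 \<longleftrightarrow> (AE x in lebesgue. f x = 0)) \<and>
     (\<forall>f \<in> borel_measurable lebesgue. \<forall>a::real. a \<ge> 0 \<longrightarrow>
        \<rho> (\<lambda>x. ennreal a * f x) = ennreal a * \<rho> f) \<and>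
     (\<forall>f \<in> borel_measurable lebesgue. \<forall>g \<in> borel_measurable lebesgue.
        \<rho> (\<lambda>x. f x + g x) \<le> \<rho> f + \<rho> g) \<and>
     \<comment> \<open>(A2)\<close>
     (\<forall>f \<in> borel_measurable lebesgue. \<forall>g \<in> borel_measurable lebesgue.
        (AE x in lebesgue. g x \<le> f x) \<longrightarrow> \<rho> g \<le> \<rho> f) \<and>
     \<comment> \<open>(A3)\<close>
     (\<forall>F f. (\<forall>j. F j \<in> borel_measurable lebesgue) \<longrightarrow> f \<in> borel_measurable lebesgue \<longrightarrow>
        (AE x in lebesgue. incseq (\<lambda>j. F j x) \<and> (\<lambda>j. F j x) \<longlonglongrightarrow> f x) \<longrightarrow>
        (\<lambda>j. \<rho> (F j)) \<longlonglongrightarrow> \<rho> f) \<and>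
     \<comment> \<open>(A4)\<close>
     (\<forall>E \<in> sets lebesgue. emeasure lebesgue E < \<infinity> \<longrightarrow> \<rho> (indicator E) < \<infinity>) \<and>
     \<comment> \<open>(A5)\<close>
     (\<forall>E \<in> sets lebesgue. emeasure lebesgue E < \<infinity> \<longrightarrow>
        (\<exists>C::real. \<forall>f \<in> borel_measurable lebesgue.
            set_nn_integral lebesgue E f \<le> ennreal C * \<rho> f))"

definition Ynorm :: "((real^'n \<Rightarrow> ennreal) \<Rightarrow> ennreal) \<Rightarrow> (real^'n \<Rightarrow> complex) \<Rightarrow> ennreal" where
  "Ynorm \<rho> f = \<rho> (\<lambda>x. ennreal (cmod (f x)))"

definition in_Y :: "((real^'n \<Rightarrow> ennreal) \<Rightarrow> ennreal) \<Rightarrow> (real^'n \<Rightarrow> complex) \<Rightarrow> bool" where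
  "in_Y \<rho> f \<longleftrightarrow> f \<in> borel_measurable lebesgue \<and> Ynorm \<rho> f < \<infinity>"

definition translation_invariant :: "((real^'n \<Rightarrow> ennreal) \<Rightarrow> ennreal) \<Rightarrow> bool" where
  "translation_invariant \<rho> \<longleftrightarrow>
     (\<forall>u y. in_Y \<rho> u \<longrightarrow> Ynorm \<rho> (\<lambda>x. u (x - y)) = Ynorm \<rho> u)"

definition in_Yw :: "((real^'n \<Rightarrow> ennreal) \<Rightarrow> ennreal) \<Rightarrow> (real^'n \<Rightarrow> real) \<Rightarrow> (real^'n \<Rightarrow> complex) \<Rightarrow> bool" where
  "in_Yw \<rho> w f \<longleftrightarrow> in_Y \<rho> (\<lambda>x. f x * complex_of_real (w x))"

definition Ywnorm :: "((real^'n \<Rightarrow> ennreal) \<Rightarrow> ennreal) \<Rightarrow> (real^'n \<Rightarrow> real) \<Rightarrow> (real^'n \<Rightarrow> complex) \<Rightarrow> ennreal" where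
  "Ywnorm \<rho> w f = Ynorm \<rho> (\<lambda>x. f x * complex_of_real (w x))"

definition partial :: "'n::finite \<Rightarrow> (real^'n \<Rightarrow> complex) \<Rightarrow> real^'n \<Rightarrow> complex" where
  "partial i f x = vector_derivative (\<lambda>t. f (x + t *\<^sub>R axis i 1)) (at 0)"

fun dlist :: "'n::finite list \<Rightarrow> (real^'n \<Rightarrow> complex) \<Rightarrow> real^'n \<Rightarrow> complex" where
  "dlist [] f = f"
| "dlist (i # is) f = partial i (dlist is f)"

definition schwartz :: "(real^'n::finite \<Rightarrow> complex) \<Rightarrow> bool" where
  "schwartz f \<longleftrightarrow>
     (\<forall>is i x. (\<lambda>t. dlist is f (x + t *\<^sub>R axis i 1)) differentiable (at 0)) \<and>
     (\<forall>is (N::nat). \<exists>B. \<forall>x. (1 + norm x) ^ N * cmod (dlist is f x) \<le> B)"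

definition schwartz_seminorm :: "nat \<Rightarrow> (real^'n::finite \<Rightarrow> complex) \<Rightarrow> real" where
  "schwartz_seminorm N f =
     Sup {(1 + norm x) ^ N * cmod (dlist is f x) | x is. length is \<le> N}"

text \<open>Tempered distributions: continuous linear functionals on the Schwartz space
(values outside the Schwartz space are irrelevant).\<close>

definition tempered :: "((real^'n::finite \<Rightarrow> complex) \<Rightarrow> complex) \<Rightarrow> bool" where
  "tempered T \<longleftrightarrow>
     (\<forall>f g. schwartz f \<longrightarrow> schwartz g \<longrightarrow> T (\<lambda>x. f x + g x) = T f + T g) \<and>
     (\<forall>f c. schwartz f \<longrightarrow> T (\<lambda>x. c * f x) = c * T f) \<and>
     (\<exists>C N. \<forall>f. schwartz f \<longrightarrow> cmod (T f) \<le> C * schwartz_seminorm N f)"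

definition fourier :: "(real^'n::finite \<Rightarrow> complex) \<Rightarrow> real^'n \<Rightarrow> complex" where
  "fourier u \<xi> = (LINT x|lebesgue. u x * cis (- (x \<bullet> \<xi>)))"

definition inv_fourier :: "(real^'n::finite \<Rightarrow> complex) \<Rightarrow> real^'n \<Rightarrow> complex" where
  "inv_fourier v x = complex_of_real ((2 * pi) powr (- real CARD('n))) *
                     (LINT \<xi>|lebesgue. v \<xi> * cis (x \<bullet> \<xi>))"

text \<open>The distribution F^{-1} a F u for a \<in> S' and u \<in> S:
 <F^{-1}(a (F u)), \<phi>> = <a (F u), F^{-1} \<phi>> = <a, (F u) (F^{-1} \<phi>)>.\<close>

definition multiplier_op ::
  "((real^'n::finite \<Rightarrow> complex) \<Rightarrow> complex) \<Rightarrow> (real^'n \<Rightarrow> complex) \<Rightarrow> (real^'n \<Rightarrow> complex) \<Rightarrow> complex" where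
  "multiplier_op a u = (\<lambda>\<phi>. a (\<lambda>\<xi>. fourier u \<xi> * inv_fourier \<phi> \<xi>))"

definition represents :: "((real^'n::finite \<Rightarrow> complex) \<Rightarrow> complex) \<Rightarrow> (real^'n \<Rightarrow> complex) \<Rightarrow> bool" where
  "represents T g \<longleftrightarrow>
     g \<in> borel_measurable lebesgue \<and>
     (\<forall>\<phi>. schwartz \<phi> \<longrightarrow> integrable lebesgue (\<lambda>x. g x * \<phi> x) \<and>
                         T \<phi> = (LINT x|lebesgue. g x * \<phi> x))"

text \<open>Fourier multipliers on Z = Y(R^n,w): a \<in> S' with
 sup {\<parallel>F^{-1} a F u\<parallel>_Z / \<parallel>u\<parallel>_Z : u \<in> (S \<inter> Z) \ {0}} < \<infinity>.\<close>

definition fourier_multiplier_Yw ::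
  "((real^'n::finite \<Rightarrow> ennreal) \<Rightarrow> ennreal) \<Rightarrow> (real^'n \<Rightarrow> real) \<Rightarrow> ((real^'n \<Rightarrow> complex) \<Rightarrow> complex) \<Rightarrow> bool" where
  "fourier_multiplier_Yw \<rho> w a \<longleftrightarrow> tempered a \<and>
     (\<exists>C::real. \<forall>u. schwartz u \<and> in_Yw \<rho> w u \<and> (\<exists>x. u x \<noteq> 0) \<longrightarrow>
        (\<exists>g. in_Yw \<rho> w g \<and> represents (multiplier_op a u) g \<and>
             Ywnorm \<rho> w g \<le> ennreal C * Ywnorm \<rho> w u))"

definition constant_distribution :: "((real^'n::finite \<Rightarrow> complex) \<Rightarrow> complex) \<Rightarrow> bool" where
  "constant_distribution a \<longleftrightarrow>
     (\<exists>k. \<forall>\<phi>. schwartz \<phi> \<longrightarrow> a \<phi> = k * (LINT x|lebesgue. \<phi> x))"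

end

theory Submission
  imports Defs "HOL-Probability.Probability"
begin

lemma DIM_vec_real: "DIM(real^'n::finite) = CARD('n)" by simp

lemma lborel_vec_affine:
  fixes c :: real and t :: "real^'n::finite"
  assumes "c \<noteq> 0"
  shows "lborel = density (distr lborel borel (\<lambda>x. t + c *\<^sub>R x)) (\<lambda>_. \<bar>c\<bar>^CARD('n))"
  using lborel_affine[OF assms, of t] by simp

lemma integral_vec_affine:
  fixes f :: "real^'n::finite \<Rightarrow> 'a::{banach, second_countable_topology}" and c :: real
  assumes c: "c \<noteq> 0" and f[measurable]: "f \<in> borel_measurable borel"
  shows "integral\<^sup>L lborel f = (\<bar>c\<bar>^CARD('n)) *\<^sub>R (\<integral>x. f (t + c *\<^sub>R x) \<partial>lborel)"
    and "integrable lborel f \<longleftrightarrow> integrable lborel (\<lambda>x. f (t + c *\<^sub>R x))"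
proof -
  have m: "(\<lambda>x. t + c *\<^sub>R x) \<in> borel_measurable (borel :: (real^'n) measure)" by measurable
  have "integral\<^sup>L lborel f = integral\<^sup>L (density (distr lborel borel (\<lambda>x. t + c *\<^sub>R x)) (\<lambda>_. \<bar>c\<bar>^CARD('n))) f"
    using lborel_vec_affine[OF c, of t] by simp
  also have "\<dots> = (\<integral>x. (\<bar>c\<bar>^CARD('n)) *\<^sub>R f x \<partial>distr lborel borel (\<lambda>x. t + c *\<^sub>R x))"
    by (subst integral_density) auto
  also have "\<dots> = (\<integral>x. (\<bar>c\<bar>^CARD('n)) *\<^sub>R f (t + c *\<^sub>R x) \<partial>lborel)"
    by (subst integral_distr) (auto simp: m)
  also have "\<dots> = (\<bar>c\<bar>^CARD('n)) *\<^sub>R (\<integral>x. f (t + c *\<^sub>R x) \<partial>lborel)" by simp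
  finally show "integral\<^sup>L lborel f = (\<bar>c\<bar>^CARD('n)) *\<^sub>R (\<integral>x. f (t + c *\<^sub>R x) \<partial>lborel)" .
  have "integrable lborel f \<longleftrightarrow> integrable (density (distr lborel borel (\<lambda>x. t + c *\<^sub>R x)) (\<lambda>_. \<bar>c\<bar>^CARD('n))) f"
    using lborel_vec_affine[OF c, of t] by simp
  also have "\<dots> \<longleftrightarrow> integrable (distr lborel borel (\<lambda>x. t + c *\<^sub>R x)) (\<lambda>x. (\<bar>c\<bar>^CARD('n)) *\<^sub>R f x)"
    by (subst integrable_density) auto
  also have "\<dots> \<longleftrightarrow> integrable lborel (\<lambda>x. (\<bar>c\<bar>^CARD('n)) *\<^sub>R f (t + c *\<^sub>R x))"
    by (subst integrable_distr_eq) (auto simp: m)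
  also have "\<dots> \<longleftrightarrow> integrable lborel (\<lambda>x. f (t + c *\<^sub>R x))"
    using c integrable_scaleR_right[of "1/(\<bar>c\<bar>^CARD('n))" lborel "\<lambda>x. (\<bar>c\<bar>^CARD('n)) *\<^sub>R f (t + c *\<^sub>R x)"]
      integrable_scaleR_right[of "(\<bar>c\<bar>^CARD('n))" lborel "\<lambda>x. f (t + c *\<^sub>R x)"] by auto
  finally show "integrable lborel f \<longleftrightarrow> integrable lborel (\<lambda>x. f (t + c *\<^sub>R x))" .
qed

lemma lborel_vec_prod:
  fixes f :: "real^'n::finite \<Rightarrow> real \<Rightarrow> 'a::{real_normed_field,banach,second_countable_topology}"
  assumes int: "\<And>b. b \<in> Basis \<Longrightarrow> integrable lborel (f b)"
  shows "integrable lborel (\<lambda>x. \<Prod>b\<in>Basis. f b (x \<bullet> b))"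
    and "(\<integral>x. (\<Prod>b\<in>Basis. f b (x \<bullet> b)) \<partial>lborel) = (\<Prod>b\<in>Basis. integral\<^sup>L lborel (f b))"
proof -
  interpret product_sigma_finite "\<lambda>_::real^'n. lborel :: real measure" by standard
  let ?T = "\<lambda>g. \<Sum>b\<in>Basis. g b *\<^sub>R (b::real^'n)"
  have m: "?T \<in> measurable (\<Pi>\<^sub>M b\<in>Basis. lborel) borel" by measurable
  have fm[measurable]: "\<And>b. b\<in>Basis \<Longrightarrow> f b \<in> borel_measurable borel"
    using int by (auto dest: borel_measurable_integrable)
  have eq: "\<And>g. g \<in> space (\<Pi>\<^sub>M b\<in>Basis. lborel) \<Longrightarrow> (\<Prod>b\<in>Basis. f b (?T g \<bullet> b)) = (\<Prod>b\<in>Basis. f b (g b))"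
    by (intro prod.cong refl) (simp add: inner_sum_left inner_Basis if_distrib cong: if_cong)
  have pm: "(\<lambda>x. \<Prod>b\<in>Basis. f b (x \<bullet> b)) \<in> borel_measurable (borel :: (real^'n) measure)"
    by measurable
  have pi: "integrable (\<Pi>\<^sub>M b\<in>Basis. lborel) (\<lambda>g. \<Prod>b\<in>Basis. f b (g b))"
    by (rule product_integrable_prod) (auto intro: int)
  show "integrable lborel (\<lambda>x. \<Prod>b\<in>Basis. f b (x \<bullet> b))"
    apply (subst lborel_eq)
    apply (subst integrable_distr_eq[OF m])
     apply (simp add: pm)
    using pi by (subst Bochner_Integration.integrable_cong[OF refl eq])
  have "(\<integral>x. (\<Prod>b\<in>Basis. f b (x \<bullet> b)) \<partial>lborel) = (\<integral>g. (\<Prod>b\<in>Basis. f b (?T g \<bullet> b)) \<partial>(\<Pi>\<^sub>M b\<in>Basis. lborel))"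
    by (subst lborel_eq) (subst integral_distr[OF m], simp_all add: pm)
  also have "\<dots> = (\<integral>g. (\<Prod>b\<in>Basis. f b (g b)) \<partial>(\<Pi>\<^sub>M b\<in>Basis. lborel))"
    by (rule Bochner_Integration.integral_cong) (auto simp: eq)
  also have "\<dots> = (\<Prod>b\<in>Basis. integral\<^sup>L lborel (f b))"
    by (rule product_integral_prod) (auto intro: int)
  finally show "(\<integral>x. (\<Prod>b\<in>Basis. f b (x \<bullet> b)) \<partial>lborel) = (\<Prod>b\<in>Basis. integral\<^sup>L lborel (f b))" .
qed

definition Pw :: "real^'n::finite \<Rightarrow> real" where
  "Pw x = (\<Prod>b\<in>Basis. inverse (1 + (x \<bullet> b)\<^sup>2))"

lemma Pw_pos: "0 < Pw x"
  unfolding Pw_def by (intro prod_pos) (auto intro: add_pos_nonneg)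

lemma Pw_le1: "Pw x \<le> 1"
  unfolding Pw_def by (intro prod_le_1) (auto intro: add_pos_nonneg simp: inverse_le_1_iff)

lemma Pw_measurable[measurable]: "Pw \<in> borel_measurable borel"
  unfolding Pw_def by measurable

lemma integrable_inv_1_sq: "integrable lborel (\<lambda>x::real. inverse (1 + x\<^sup>2))"
  using integrable_inverse_1_plus_square by (simp add: einterval_eq_UNIV set_integrable_def)

lemma Pw_integrable: "integrable lborel (Pw :: real^'n::finite \<Rightarrow> real)"
  unfolding Pw_def[abs_def]
  using lborel_vec_prod(1)[of "\<lambda>_ x. inverse (1 + x\<^sup>2)"] integrable_inv_1_sq by simp

lemma Pw_lower: "inverse ((1 + norm x) ^ (2 * CARD('n))) \<le> Pw (x :: real^'n::finite)"
proof -
  have "(\<Prod>b\<in>(Basis::(real^'n) set). 1 + (x \<bullet> b)\<^sup>2) \<le> (\<Prod>b\<in>(Basis::(real^'n) set). (1 + norm x)^2)"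
  proof (intro prod_mono conjI)
    fix b :: "real^'n" assume b: "b \<in> Basis"
    have "\<bar>x \<bullet> b\<bar> \<le> norm x" using Basis_le_norm[OF b] by simp
    then have "(x \<bullet> b)\<^sup>2 \<le> (norm x)\<^sup>2"
      by (metis abs_ge_zero power2_abs power_mono)
    then show "1 + (x \<bullet> b)\<^sup>2 \<le> (1 + norm x)^2"
    proof -
      have e: "(1 + norm x)^2 = 1 + (norm x)^2 + 2*norm x" by (simp add: power2_eq_square algebra_simps)
      show ?thesis using e \<open>(x \<bullet> b)\<^sup>2 \<le> (norm x)\<^sup>2\<close> norm_ge_zero[of x] by linarith
    qed
  qed (auto intro: add_nonneg_nonneg)
  also have "\<dots> = (1 + norm x) ^ (2 * CARD('n))"
    by (simp add: power_mult[symmetric] mult.commute)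
  finally have le: "(\<Prod>b\<in>(Basis::(real^'n) set). 1 + (x \<bullet> b)\<^sup>2) \<le> (1 + norm x) ^ (2 * CARD('n))" .
  have pos: "0 < (\<Prod>b\<in>(Basis::(real^'n) set). 1 + (x \<bullet> b)\<^sup>2)"
    by (intro prod_pos) (auto intro: add_pos_nonneg)
  have "inverse ((1 + norm x) ^ (2 * CARD('n))) \<le> inverse (\<Prod>b\<in>(Basis::(real^'n) set). 1 + (x \<bullet> b)\<^sup>2)"
    using le pos by (intro le_imp_inverse_le) auto
  also have "\<dots> = Pw x" unfolding Pw_def using prod_inversef[symmetric, of "\<lambda>b. 1 + (x \<bullet> b)\<^sup>2" Basis] by (simp add: o_def)
  finally show ?thesis .
qed

lemma decay_Pw:
  fixes f :: "real^'n::finite \<Rightarrow> complex"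
  assumes "\<And>x. (1 + norm x) ^ (2 * CARD('n)) * cmod (f x) \<le> B"
  shows "cmod (f x) \<le> B * Pw x"
proof -
  have p: "0 < (1 + norm x) ^ (2 * CARD('n))" by (simp add: add_pos_nonneg)
  have B: "0 \<le> B" using assms[of x] p by (smt (verit) mult_nonneg_nonneg norm_ge_zero)
  have "cmod (f x) \<le> B * inverse ((1 + norm x) ^ (2 * CARD('n)))"
    using assms[of x] p by (simp add: field_simps)
  also have "\<dots> \<le> B * Pw x" using B Pw_lower[of x] by (intro mult_left_mono) auto
  finally show ?thesis .
qed

lemma dlist_append: "dlist (xs @ ys) f = dlist xs (dlist ys f)"
  by (induction xs) auto

lemma schwartz_dlist: "schwartz f \<Longrightarrow> schwartz (dlist is f)"
  unfolding schwartz_def by (metis dlist_append)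

lemma schwartz_bound: "schwartz f \<Longrightarrow> \<exists>B. \<forall>x. (1 + norm x) ^ N * cmod (dlist is f x) \<le> B"
  unfolding schwartz_def by blast

lemma schwartz_bound0: "schwartz f \<Longrightarrow> \<exists>B. \<forall>x. cmod (f x) \<le> B"
  using schwartz_bound[of f 0 "[]"] by auto

lemma schwartz_Pw: "schwartz f \<Longrightarrow> \<exists>B. \<forall>x. cmod (dlist is f x) \<le> B * Pw x"
  using schwartz_bound[of f "2 * CARD('n)" "is"] decay_Pw by metis

lemma schwartz_line_deriv:
  assumes "schwartz f"
  shows "((\<lambda>t. f (x + t *\<^sub>R axis j 1)) has_vector_derivative partial j f (x + t0 *\<^sub>R axis j 1)) (at t0)"
proof -
  let ?y = "x + t0 *\<^sub>R axis j 1"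
  have "(\<lambda>s. dlist [] f (?y + s *\<^sub>R axis j 1)) differentiable (at 0)"
    using assms unfolding schwartz_def by blast
  then have d: "((\<lambda>s. f (?y + s *\<^sub>R axis j 1)) has_vector_derivative partial j f ?y) (at 0)"
    unfolding partial_def by (simp add: vector_derivative_works[symmetric])
  have s: "((\<lambda>t. t - t0) has_vector_derivative 1) (at t0)"
    by (auto intro!: derivative_eq_intros)
  have "((\<lambda>s. f (?y + s *\<^sub>R axis j 1)) \<circ> (\<lambda>t. t - t0) has_vector_derivative 1 *\<^sub>R partial j f ?y) (at t0)"
    by (rule vector_diff_chain_at[OF s]) (simp add: d)
  moreover have "(\<lambda>s. f (?y + s *\<^sub>R axis j 1)) \<circ> (\<lambda>t. t - t0) = (\<lambda>t. f (x + t *\<^sub>R axis j 1))"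
    by (auto simp: fun_eq_iff algebra_simps)
  ultimately show ?thesis by simp
qed

lemma mvt_line:
  fixes g :: "real \<Rightarrow> complex"
  assumes d: "\<And>t. t \<in> {a..b} \<Longrightarrow> (g has_vector_derivative g' t) (at t)"
    and B: "\<And>t. t \<in> {a..b} \<Longrightarrow> norm (g' t) \<le> B" and ab: "a \<le> b"
  shows "norm (g b - g a) \<le> B * (b - a)"
proof -
  have "norm (g b - g a) \<le> B * norm (b - a)"
  proof (rule differentiable_bound[where f' = "\<lambda>t h. h *\<^sub>R g' t"])
    show "convex {a..b}" by simp
    show "(g has_derivative (\<lambda>h. h *\<^sub>R g' t)) (at t within {a..b})" if "t \<in> {a..b}" for t
      using d[OF that] by (simp add: has_vector_derivative_def has_derivative_at_withinI)
    show "onorm (\<lambda>h. h *\<^sub>R g' t) \<le> B" if "t \<in> {a..b}" for t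
    proof -
      have "onorm (\<lambda>h. h *\<^sub>R g' t) = onorm (\<lambda>h::real. h) * norm (g' t)"
        by (rule onorm_scaleR_left) (rule bounded_linear_ident)
      also have "onorm (\<lambda>h::real. h) = 1" using onorm_id[where 'a=real] by (simp add: id_def)
      finally show ?thesis using B[OF that] by simp
    qed
  qed (use ab in auto)
  then show ?thesis using ab by simp
qed

lemma line_lipschitz:
  fixes g :: "real \<Rightarrow> complex"
  assumes d: "\<And>t. (g has_vector_derivative g' t) (at t)" and B: "\<And>t. norm (g' t) \<le> B"
  shows "norm (g b - g a) \<le> B * \<bar>b - a\<bar>"
proof (cases "a \<le> b")
  case True then show ?thesis using mvt_line[of a b g g' B] d B by auto
next
  case False then have "norm (g a - g b) \<le> B * (a - b)" using mvt_line[of b a g g' B] d B by auto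
  then show ?thesis using False by (simp add: norm_minus_commute)
qed

lemma schwartz_partial_bound: "schwartz f \<Longrightarrow> \<exists>B. \<forall>j x. cmod (partial j f x) \<le> B"
proof -
  assume f: "schwartz f"
  have "\<forall>j. \<exists>B. \<forall>x. cmod (partial j f x) \<le> B"
    using schwartz_bound[OF f, of 0 "[_]"] by simp
  then obtain B where B: "\<And>j x. cmod (partial j f x) \<le> B j" by metis
  have "cmod (partial j f x) \<le> (\<Sum>j\<in>UNIV. \<bar>B j\<bar>)" for j x
    using B[of j x] member_le_sum[of j UNIV "\<lambda>j. \<bar>B j\<bar>"] by fastforce
  then show ?thesis by blast
qed

lemma schwartz_lipschitz:
  assumes f: "schwartz (f :: real^'n::finite \<Rightarrow> complex)"
  shows "\<exists>L\<ge>0. \<forall>x y. cmod (f y - f x) \<le> L * norm (y - x)"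
proof -
  obtain B where B: "\<And>j x. cmod (partial j f x) \<le> B" using schwartz_partial_bound[OF f] by blast
  have B0: "0 \<le> B" using B[of undefined 0] by (meson norm_ge_zero order_trans)
  have step: "cmod (f (z + s *\<^sub>R axis j 1) - f z) \<le> B * \<bar>s\<bar>" for z s j
    using line_lipschitz[of "\<lambda>t. f (z + t *\<^sub>R axis j 1)" "\<lambda>t. partial j f (z + t *\<^sub>R axis j 1)" B s 0]
      schwartz_line_deriv[OF f, of z j] B by simp
  have main: "cmod (f (\<chi> j. if j \<in> S then y $ j else x $ j) - f x) \<le> B * (\<Sum>j\<in>S. \<bar>y $ j - x $ j\<bar>)"
    for x y :: "real^'n" and S :: "'n set"
  proof (induction S rule: infinite_finite_induct)
    case (infinite A) then show ?case by simp
  next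
    case empty
    have "(\<chi> j. if j \<in> {} then y $ j else x $ j) = x" by (simp add: vec_eq_iff)
    then show ?case by simp
  next
    case (insert j S)
    let ?z = "\<chi> k. if k \<in> S then y $ k else x $ k"
    have eq: "(\<chi> k. if k \<in> insert j S then y $ k else x $ k) = ?z + (y $ j - x $ j) *\<^sub>R axis j 1"
      using insert(2) by (auto simp: vec_eq_iff axis_def)
    have "cmod (f (?z + (y $ j - x $ j) *\<^sub>R axis j 1) - f x) \<le>
          cmod (f (?z + (y $ j - x $ j) *\<^sub>R axis j 1) - f ?z) + cmod (f ?z - f x)"
      using norm_triangle_ineq[of "f (?z + (y $ j - x $ j) *\<^sub>R axis j 1) - f ?z" "f ?z - f x"] by simp
    also have "\<dots> \<le> B * \<bar>y $ j - x $ j\<bar> + B * (\<Sum>j\<in>S. \<bar>y $ j - x $ j\<bar>)"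
      using step insert.IH by (intro add_mono) auto
    finally show ?case using eq insert(1,2) by (simp add: distrib_left)
  qed
  have "cmod (f y - f x) \<le> B * CARD('n) * norm (y - x)" for x y :: "real^'n"
  proof -
    have "(\<chi> j. if j \<in> UNIV then y $ j else x $ j) = y" by (simp add: vec_eq_iff)
    then have "cmod (f y - f x) \<le> B * (\<Sum>j\<in>UNIV. \<bar>y $ j - x $ j\<bar>)" using main[of UNIV y x] by simp
    also have "(\<Sum>j\<in>UNIV. \<bar>y $ j - x $ j\<bar>) \<le> (\<Sum>j\<in>(UNIV::'n set). norm (y - x))"
      by (intro sum_mono) (metis component_le_norm_cart vector_minus_component)
    finally show ?thesis using B0 by (simp add: mult_left_mono mult.assoc)
  qed
  then show ?thesis using B0 by (intro exI[of _ "B * CARD('n)"]) auto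
qed

lemma schwartz_continuous: "schwartz f \<Longrightarrow> continuous_on UNIV f"
proof -
  assume "schwartz f"
  then obtain L where L: "L \<ge> 0" "\<And>x y. cmod (f y - f x) \<le> L * norm (y - x)"
    using schwartz_lipschitz by blast
  have "L-lipschitz_on UNIV f"
    using L by (intro lipschitz_onI) (auto simp: dist_norm)
  then show ?thesis by (rule lipschitz_on_continuous_on)
qed

lemma schwartz_measurable: "schwartz f \<Longrightarrow> f \<in> borel_measurable borel"
  by (intro borel_measurable_continuous_onI schwartz_continuous)

lemma schwartz_integrable: "schwartz f \<Longrightarrow> integrable lborel f"
proof -
  assume f: "schwartz f"
  obtain B where B: "\<And>x. cmod (dlist [] f x) \<le> B * Pw x" using schwartz_Pw[OF f] by blast
  show ?thesis
  proof (rule Bochner_Integration.integrable_bound[where f="\<lambda>x. B * Pw x"])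
    show "integrable lborel (\<lambda>x. B * Pw x)" by (intro integrable_mult_right Pw_integrable)
    show "f \<in> borel_measurable lborel" using schwartz_measurable[OF f] by simp
    show "AE x in lborel. norm (f x) \<le> norm (B * Pw x)"
      using B by (auto intro!: always_eventually) (metis abs_ge_self dual_order.trans norm_mult real_norm_def)
  qed
qed

lemma vd_quotient:
  fixes g :: "real \<Rightarrow> 'a::real_normed_vector"
  assumes d: "(g has_vector_derivative g') (at 0)" and s: "s \<longlonglongrightarrow> 0" and s0: "\<And>k. s k \<noteq> 0"
  shows "(\<lambda>k. (1 / s k) *\<^sub>R (g (s k) - g 0)) \<longlonglongrightarrow> g'"
proof -
  have "(\<lambda>h. norm (g (0 + h) - g 0 - h *\<^sub>R g') / norm h) \<midarrow>0\<rightarrow> 0"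
    using d unfolding has_vector_derivative_def has_derivative_at by blast
  then have l: "(\<lambda>h. norm (g h - g 0 - h *\<^sub>R g') / norm h) \<midarrow>0\<rightarrow> 0" by simp
  have fs: "filterlim s (at 0) sequentially"
    using s s0 by (auto simp: filterlim_at)
  have "(\<lambda>k. norm (g (s k) - g 0 - s k *\<^sub>R g') / norm (s k)) \<longlonglongrightarrow> 0"
    using filterlim_compose[OF l fs] by (simp add: o_def)
  moreover have "norm ((1 / s k) *\<^sub>R (g (s k) - g 0) - g') = norm (g (s k) - g 0 - s k *\<^sub>R g') / norm (s k)" for k
  proof -
    have "(1 / s k) *\<^sub>R (g (s k) - g 0) - g' = (1 / s k) *\<^sub>R (g (s k) - g 0 - s k *\<^sub>R g')"
      using s0[of k] by (simp add: algebra_simps)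
    then show ?thesis by (simp add: divide_inverse abs_inverse mult.commute)
  qed
  ultimately have "(\<lambda>k. norm ((1 / s k) *\<^sub>R (g (s k) - g 0) - g')) \<longlonglongrightarrow> 0" by simp
  then show ?thesis using tendsto_norm_zero_iff LIM_zero_cancel by blast
qed

lemma partial_diff:
  assumes "(\<lambda>t. F (x + t *\<^sub>R axis j 1)) differentiable (at 0)"
    and "(\<lambda>t. G (x + t *\<^sub>R axis j 1)) differentiable (at 0)"
  shows "partial j (\<lambda>x. F x - G x) x = partial j F x - partial j G x"
proof -
  have "((\<lambda>t. F (x + t *\<^sub>R axis j 1) - G (x + t *\<^sub>R axis j 1)) has_vector_derivative
          partial j F x - partial j G x) (at 0)"
    using assms unfolding partial_def vector_derivative_works
    by (intro has_vector_derivative_diff) auto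
  then show ?thesis unfolding partial_def by (rule vector_derivative_at)
qed

lemma schwartz_diff_dlist:
  assumes f: "schwartz f" and g: "schwartz g"
  shows "dlist is (\<lambda>x. f x - g x) = (\<lambda>x. dlist is f x - dlist is g x)"
proof (induction "is")
  case Nil then show ?case by simp
next
  case (Cons i "is")
  have df: "(\<lambda>t. dlist is f (x + t *\<^sub>R axis i 1)) differentiable (at 0)" for x
    using f unfolding schwartz_def by blast
  have dg: "(\<lambda>t. dlist is g (x + t *\<^sub>R axis i 1)) differentiable (at 0)" for x
    using g unfolding schwartz_def by blast
  show ?case by (simp only: dlist.simps Cons.IH) (rule ext, rule partial_diff[OF df dg])
qed

lemma schwartz_diff:
  assumes f: "schwartz f" and g: "schwartz g"
  shows "schwartz (\<lambda>x. f x - g x)"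
  unfolding schwartz_def schwartz_diff_dlist[OF f g]
proof (intro conjI allI)
  fix "is" i x
  have df: "(\<lambda>t. dlist is f (x + t *\<^sub>R axis i 1)) differentiable (at 0)"
    using f unfolding schwartz_def by blast
  have dg: "(\<lambda>t. dlist is g (x + t *\<^sub>R axis i 1)) differentiable (at 0)"
    using g unfolding schwartz_def by blast
  show "(\<lambda>t. dlist is f (x + t *\<^sub>R axis i 1) - dlist is g (x + t *\<^sub>R axis i 1)) differentiable (at 0)"
    using df dg by (rule differentiable_diff)
next
  fix "is" and N :: nat
  obtain B1 where B1: "\<And>x. (1 + norm x) ^ N * cmod (dlist is f x) \<le> B1" using schwartz_bound[OF f] by blast
  obtain B2 where B2: "\<And>x. (1 + norm x) ^ N * cmod (dlist is g x) \<le> B2" using schwartz_bound[OF g] by blast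
  have "(1 + norm x) ^ N * cmod (dlist is f x - dlist is g x) \<le> B1 + B2" for x
  proof -
    have "(1 + norm x) ^ N * cmod (dlist is f x - dlist is g x) \<le>
          (1 + norm x) ^ N * (cmod (dlist is f x) + cmod (dlist is g x))"
      by (intro mult_left_mono norm_triangle_ineq4) (simp add: add_nonneg_nonneg)
    also have "\<dots> \<le> B1 + B2" using B1[of x] B2[of x] by (simp add: distrib_left)
    finally show ?thesis .
  qed
  then show "\<exists>B. \<forall>x. (1 + norm x) ^ N * cmod (dlist is f x - dlist is g x) \<le> B" by blast
qed

lemma cis_measurable'[measurable (raw)]:
  "g \<in> borel_measurable M \<Longrightarrow> (\<lambda>x. cis (g x)) \<in> borel_measurable M"
  by (rule measurable_compose[OF _ borel_measurable_continuous_onI[OF continuous_on_cis[OF continuous_on_id]]])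

lemma measurable_fourier_integrand:
  assumes [measurable]: "f \<in> borel_measurable borel"
  shows "(\<lambda>x. f x * cis (- (x \<bullet> (\<xi>::real^'n::finite)))) \<in> borel_measurable borel"
  by measurable

lemma fourier_lborel:
  fixes f :: "real^'n::finite \<Rightarrow> complex"
  assumes [measurable]: "f \<in> borel_measurable borel"
  shows "fourier f \<xi> = (\<integral>x. f x * cis (- (x \<bullet> \<xi>)) \<partial>lborel)"
  unfolding fourier_def by (rule integral_completion) simp

lemma fourier_measurable:
  fixes f :: "real^'n::finite \<Rightarrow> complex"
  assumes [measurable]: "f \<in> borel_measurable borel"
  shows "fourier f \<in> borel_measurable borel"
proof -
  have "(\<lambda>(\<xi>, x). f x * cis (- (x \<bullet> (\<xi>::real^'n)))) \<in> borel_measurable (borel \<Otimes>\<^sub>M lborel)"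
    by measurable
  then have "(\<lambda>\<xi>. \<integral>x. f x * cis (- (x \<bullet> \<xi>)) \<partial>lborel) \<in> borel_measurable borel"
    by (rule lborel.borel_measurable_lebesgue_integral)
  moreover have "fourier f = (\<lambda>\<xi>. \<integral>x. f x * cis (- (x \<bullet> \<xi>)) \<partial>lborel)"
    by (rule ext, rule fourier_lborel) simp
  ultimately show ?thesis by simp
qed

lemma fourier_norm_bound:
  fixes f :: "real^'n::finite \<Rightarrow> complex"
  assumes [measurable]: "f \<in> borel_measurable borel" and "integrable lborel f"
  shows "cmod (fourier f \<xi>) \<le> (\<integral>x. cmod (f x) \<partial>lborel)"
proof -
  have "cmod (fourier f \<xi>) \<le> (\<integral>x. cmod (f x * cis (- (x \<bullet> \<xi>))) \<partial>lborel)"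
    unfolding fourier_lborel[OF assms(1)] by (rule integral_norm_bound)
  then show ?thesis by (simp add: norm_mult)
qed

lemma fourier_translate:
  fixes f :: "real^'n::finite \<Rightarrow> complex"
  assumes [measurable]: "f \<in> borel_measurable borel"
  shows "fourier (\<lambda>x. f (x + t)) \<xi> = cis (t \<bullet> \<xi>) * fourier f \<xi>"
proof -
  let ?G = "\<lambda>y. f y * cis (- ((y - t) \<bullet> \<xi>))"
  have "fourier f \<xi> * cis (t \<bullet> \<xi>) = (\<integral>y. f y * cis (- (y \<bullet> \<xi>)) * cis (t \<bullet> \<xi>) \<partial>lborel)"
    unfolding fourier_lborel[OF assms] by simp
  also have "\<dots> = integral\<^sup>L lborel ?G"
    by (intro Bochner_Integration.integral_cong refl) (simp add: inner_diff_left cis_mult mult.assoc)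
  also have "\<dots> = (\<integral>x. ?G (t + 1 *\<^sub>R x) \<partial>lborel)"
    using integral_vec_affine(1)[of 1 ?G t] by simp
  also have "\<dots> = fourier (\<lambda>x. f (x + t)) \<xi>"
    by (subst fourier_lborel) (auto simp: add.commute)
  finally show ?thesis by (simp add: mult.commute)
qed

lemma integrable_translate:
  fixes f :: "real^'n::finite \<Rightarrow> 'a::{banach,second_countable_topology}"
  assumes [measurable]: "f \<in> borel_measurable borel" and "integrable lborel f"
  shows "integrable lborel (\<lambda>x. f (x + t))"
  using integral_vec_affine(2)[of 1 f t] assms by (simp add: add.commute)

lemma cis_vd: "((\<lambda>t. cis (t * a)) has_vector_derivative (\<i> * of_real a)) (at 0)"
proof -
  have "((\<lambda>z. exp (\<i> * of_real a * z)) has_field_derivative (\<i> * of_real a) * exp (\<i> * of_real a * of_real 0)) (at (of_real 0))"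
    by (auto intro!: derivative_eq_intros)
  then have "((\<lambda>t. exp (\<i> * of_real a * of_real t)) has_vector_derivative (\<i> * of_real a)) (at 0)"
    using has_vector_derivative_real_field[where s=UNIV] by fastforce
  moreover have "(\<lambda>t. exp (\<i> * of_real a * of_real t)) = (\<lambda>t. cis (t * a))"
    by (auto simp: fun_eq_iff cis_conv_exp mult_ac)
  ultimately show ?thesis by simp
qed

lemma integrable_mult_cis:
  fixes f :: "real^'n::finite \<Rightarrow> complex"
  assumes [measurable]: "f \<in> borel_measurable borel" "\<theta> \<in> borel_measurable borel" and i: "integrable lborel f"
  shows "integrable lborel (\<lambda>x. f x * cis (\<theta> x))"
  by (rule Bochner_Integration.integrable_bound[OF i]) (auto simp: norm_mult)

lemma schwartz_partial: "schwartz f \<Longrightarrow> schwartz (partial j f)"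
  using schwartz_dlist[of f "[j]"] by simp

lemma fourier_partial:
  fixes \<phi> :: "real^'n::finite \<Rightarrow> complex"
  assumes f: "schwartz \<phi>"
  shows "fourier (partial j \<phi>) \<xi> = (\<i> * of_real (\<xi> $ j)) * fourier \<phi> \<xi>"
proof -
  define e :: "real^'n" where "e = axis j 1"
  define s :: "nat \<Rightarrow> real" where "s k = inverse (real (Suc k))" for k
  define N where "N = 2 * CARD('n)"
  define D where "D k x = (1 / s k) *\<^sub>R (\<phi> (x + s k *\<^sub>R e) - \<phi> x)" for k x
  have s0: "0 < s k" "s k \<le> 1" for k unfolding s_def by (auto simp: field_simps)
  have sl: "s \<longlonglongrightarrow> 0" unfolding s_def by (rule LIMSEQ_inverse_real_of_nat)
  have [measurable]: "\<phi> \<in> borel_measurable borel" using schwartz_measurable[OF f] .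
  have [measurable]: "partial j \<phi> \<in> borel_measurable borel"
    using schwartz_measurable[OF schwartz_partial[OF f]] .
  have [measurable]: "D k \<in> borel_measurable borel" for k unfolding D_def by measurable
  have ne: "norm e = 1" unfolding e_def by simp
  obtain B where B: "\<And>z. (1 + norm z) ^ N * cmod (partial j \<phi> z) \<le> B"
    using schwartz_bound[OF f, of N "[j]"] by auto
  have bound: "(1 + norm x) ^ N * cmod (D k x) \<le> 2 ^ N * B" for k x
  proof -
    let ?g = "\<lambda>t. \<phi> (x + t *\<^sub>R e)"
    let ?g' = "\<lambda>t. partial j \<phi> (x + t *\<^sub>R e)"
    have pos: "0 < (1 + norm x) ^ N" by (simp add: add_pos_nonneg)
    have der: "(?g has_vector_derivative ?g' t) (at t)" for t
      unfolding e_def by (rule schwartz_line_deriv[OF f])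
    have gb: "norm (?g' t) \<le> 2 ^ N * B / (1 + norm x) ^ N" if t: "t \<in> {0..s k}" for t
    proof -
      have a1: "norm x \<le> norm (x + t *\<^sub>R e) + norm (t *\<^sub>R e)" by (metis add_diff_cancel_right' norm_triangle_ineq4)
      have a2: "norm (t *\<^sub>R e) \<le> 1" using t s0[of k] ne by auto
      have "1 + norm x \<le> 2 * (1 + norm (x + t *\<^sub>R e))"
        using a1 a2 norm_ge_zero[of "x + t *\<^sub>R e"] by argo
      then have "(1 + norm x) ^ N \<le> (2 * (1 + norm (x + t *\<^sub>R e))) ^ N"
        by (intro power_mono) auto
      then have "(1 + norm x) ^ N * norm (?g' t) \<le> (2 * (1 + norm (x + t *\<^sub>R e))) ^ N * norm (?g' t)"
        by (rule mult_right_mono) simp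
      also have "\<dots> = 2 ^ N * ((1 + norm (x + t *\<^sub>R e)) ^ N * norm (?g' t))"
        by (simp only: power_mult_distrib mult.assoc)
      also have "\<dots> \<le> 2 ^ N * B" using B[of "x + t *\<^sub>R e"] by simp
      finally show ?thesis using pos by (simp add: field_simps)
    qed
    have "norm (?g (s k) - ?g 0) \<le> (2 ^ N * B / (1 + norm x) ^ N) * (s k - 0)"
      by (rule mvt_line[OF der gb]) (use s0[of k] in auto)
    moreover have "cmod (D k x) = cmod (?g (s k) - ?g 0) / s k"
      unfolding D_def using s0[of k] by (simp add: divide_inverse_commute)
    ultimately have "cmod (D k x) \<le> 2 ^ N * B / (1 + norm x) ^ N"
      using s0[of k] by (simp add: divide_le_eq mult.commute)
    then show ?thesis using pos by (simp add: field_simps)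
  qed
  have Db: "cmod (D k x) \<le> 2 ^ N * B * Pw x" for k x
    using decay_Pw[of "D k" "2 ^ N * B" x] bound unfolding N_def by simp
  have lim_pt: "(\<lambda>k. D k x) \<longlonglongrightarrow> partial j \<phi> x" for x
  proof -
    have "((\<lambda>t. \<phi> (x + t *\<^sub>R e)) has_vector_derivative partial j \<phi> (x + 0 *\<^sub>R e)) (at 0)"
      unfolding e_def by (rule schwartz_line_deriv[OF f])
    from vd_quotient[OF this sl] s0 show ?thesis unfolding D_def by (simp add: less_imp_neq[symmetric])
  qed
  have int_phi: "integrable lborel \<phi>" using schwartz_integrable[OF f] .
  have intD: "(\<integral>x. D k x * cis (- (x \<bullet> \<xi>)) \<partial>lborel) = (1 / s k) *\<^sub>R ((cis (s k * \<xi> $ j) - 1) * fourier \<phi> \<xi>)" for k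
  proof -
    have i1: "integrable lborel (\<lambda>x. \<phi> (x + s k *\<^sub>R e) * cis (- (x \<bullet> \<xi>)))"
      by (rule integrable_mult_cis) (auto intro: integrable_translate int_phi)
    have i2: "integrable lborel (\<lambda>x. \<phi> x * cis (- (x \<bullet> \<xi>)))"
      by (rule integrable_mult_cis) (auto intro: int_phi)
    have "(\<integral>x. D k x * cis (- (x \<bullet> \<xi>)) \<partial>lborel) =
          (\<integral>x. (1 / s k) *\<^sub>R (\<phi> (x + s k *\<^sub>R e) * cis (- (x \<bullet> \<xi>)) - \<phi> x * cis (- (x \<bullet> \<xi>))) \<partial>lborel)"
      unfolding D_def by (intro Bochner_Integration.integral_cong refl) (simp add: algebra_simps)
    also have "\<dots> = (1 / s k) *\<^sub>R (fourier (\<lambda>x. \<phi> (x + s k *\<^sub>R e)) \<xi> - fourier \<phi> \<xi>)"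
      by (simp add: fourier_lborel Bochner_Integration.integral_diff[OF i1 i2])
    also have "\<dots> = (1 / s k) *\<^sub>R ((cis (s k * \<xi> $ j) - 1) * fourier \<phi> \<xi>)"
      by (simp add: fourier_translate e_def algebra_simps inner_axis')
    finally show ?thesis .
  qed
  have L1: "(\<lambda>k. \<integral>x. D k x * cis (- (x \<bullet> \<xi>)) \<partial>lborel) \<longlonglongrightarrow> fourier (partial j \<phi>) \<xi>"
    unfolding fourier_lborel[of "partial j \<phi>", OF \<open>partial j \<phi> \<in> borel_measurable borel\<close>]
  proof (rule integral_dominated_convergence[where w = "\<lambda>x. 2 ^ N * B * Pw x"])
    show "integrable lborel (\<lambda>x. 2 ^ N * B * Pw x)" by (intro integrable_mult_right Pw_integrable)
    show "AE x in lborel. (\<lambda>k. D k x * cis (- (x \<bullet> \<xi>))) \<longlonglongrightarrow> partial j \<phi> x * cis (- (x \<bullet> \<xi>))"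
      by (intro always_eventually allI tendsto_mult_right lim_pt)
    show "AE x in lborel. norm (D k x * cis (- (x \<bullet> \<xi>))) \<le> 2 ^ N * B * Pw x" for k
      using Db by (auto simp: norm_mult)
  qed auto
  have L2: "(\<lambda>k. (1 / s k) *\<^sub>R ((cis (s k * \<xi> $ j) - 1) * fourier \<phi> \<xi>)) \<longlonglongrightarrow> (\<i> * of_real (\<xi> $ j)) * fourier \<phi> \<xi>"
  proof -
    have "(\<lambda>k. (1 / s k) *\<^sub>R (cis (s k * \<xi> $ j) - cis (0 * \<xi> $ j))) \<longlonglongrightarrow> \<i> * of_real (\<xi> $ j)"
      using vd_quotient[OF cis_vd sl] s0 by (metis less_irrefl)
    then have "(\<lambda>k. ((1 / s k) *\<^sub>R (cis (s k * \<xi> $ j) - 1)) * fourier \<phi> \<xi>) \<longlonglongrightarrow> (\<i> * of_real (\<xi> $ j)) * fourier \<phi> \<xi>"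
      by (intro tendsto_mult_right) simp
    then show ?thesis by (simp add: scaleR_left_commute)
  qed
  show ?thesis using LIMSEQ_unique[OF L1[unfolded intD] L2] .
qed

lemma Basis_vec_range: "(Basis :: (real^'n::finite) set) = range (\<lambda>j. axis j 1)"
  by (auto simp: Basis_vec_def)

lemma Pw_alt: "Pw (\<xi>::real^'n::finite) = inverse (\<Prod>j\<in>UNIV. 1 + (\<xi> $ j)\<^sup>2)"
proof -
  have inj: "inj_on (\<lambda>j::'n. axis j (1::real)) UNIV" by (auto simp: inj_on_def axis_eq_axis)
  have "Pw \<xi> = (\<Prod>j\<in>UNIV. inverse (1 + (\<xi> \<bullet> axis j 1)\<^sup>2))"
    unfolding Pw_def Basis_vec_range by (subst prod.reindex[OF inj]) (simp add: o_def)
  also have "\<dots> = (\<Prod>j\<in>UNIV. inverse (1 + (\<xi> $ j)\<^sup>2))" by (simp add: inner_axis)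
  also have "\<dots> = inverse (\<Prod>j\<in>UNIV. 1 + (\<xi> $ j)\<^sup>2)"
    using prod_inversef[of "\<lambda>j. 1 + (\<xi> $ j)\<^sup>2" UNIV] by (simp add: o_def)
  finally show ?thesis .
qed

lemma fourier_diff:
  fixes f g :: "real^'n::finite \<Rightarrow> complex"
  assumes [measurable]: "f \<in> borel_measurable borel" "g \<in> borel_measurable borel"
    and "integrable lborel f" "integrable lborel g"
  shows "fourier (\<lambda>x. f x - g x) \<xi> = fourier f \<xi> - fourier g \<xi>"
proof -
  have i1: "integrable lborel (\<lambda>x. f x * cis (- (x \<bullet> \<xi>)))" by (rule integrable_mult_cis) (auto intro: assms)
  have i2: "integrable lborel (\<lambda>x. g x * cis (- (x \<bullet> \<xi>)))" by (rule integrable_mult_cis) (auto intro: assms)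
  show ?thesis
    by (simp add: fourier_lborel left_diff_distrib Bochner_Integration.integral_diff[OF i1 i2])
qed

lemma fourier_step:
  assumes f: "schwartz \<psi>"
  shows "schwartz (\<lambda>x. \<psi> x - partial j (partial j \<psi>) x)"
    and "fourier (\<lambda>x. \<psi> x - partial j (partial j \<psi>) x) \<xi> = (1 + (\<xi> $ j)\<^sup>2) * fourier \<psi> \<xi>"
proof -
  have s2: "schwartz (partial j (partial j \<psi>))" using schwartz_partial[OF schwartz_partial[OF f]] .
  show "schwartz (\<lambda>x. \<psi> x - partial j (partial j \<psi>) x)" by (rule schwartz_diff[OF f s2])
  have "fourier (\<lambda>x. \<psi> x - partial j (partial j \<psi>) x) \<xi> = fourier \<psi> \<xi> - fourier (partial j (partial j \<psi>)) \<xi>"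
    by (rule fourier_diff) (auto intro: schwartz_measurable schwartz_integrable f s2)
  also have "fourier (partial j (partial j \<psi>)) \<xi> = (\<i> * of_real (\<xi> $ j)) * ((\<i> * of_real (\<xi> $ j)) * fourier \<psi> \<xi>)"
    using fourier_partial[OF schwartz_partial[OF f]] fourier_partial[OF f] by simp
  finally show "fourier (\<lambda>x. \<psi> x - partial j (partial j \<psi>) x) \<xi> = (1 + (\<xi> $ j)\<^sup>2) * fourier \<psi> \<xi>"
    by (simp add: algebra_simps power2_eq_square)
qed

lemma fourier_decay:
  assumes f: "schwartz (\<phi> :: real^'n::finite \<Rightarrow> complex)"
  shows "\<exists>C. \<forall>\<xi>. cmod (fourier \<phi> \<xi>) \<le> C * Pw \<xi>"
proof -
  have "\<exists>\<psi>. schwartz \<psi> \<and> (\<forall>\<xi>. fourier \<psi> \<xi> = (\<Prod>j\<in>S. 1 + (\<xi> $ j)\<^sup>2) * fourier \<phi> \<xi>)"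
    for S :: "'n set"
  proof (induction S rule: infinite_finite_induct)
    case (infinite A) then show ?case by simp
  next
    case empty then show ?case using f by (intro exI[of _ \<phi>]) simp
  next
    case (insert j S)
    then obtain \<psi> where p: "schwartz \<psi>" "\<And>\<xi>. fourier \<psi> \<xi> = (\<Prod>j\<in>S. 1 + (\<xi> $ j)\<^sup>2) * fourier \<phi> \<xi>"
      by blast
    show ?case
      using fourier_step[OF p(1), of j] p(2) insert(1,2)
      by (intro exI[of _ "\<lambda>x. \<psi> x - partial j (partial j \<psi>) x"]) (simp add: mult_ac)
  qed
  then obtain \<psi> where p: "schwartz \<psi>" "\<And>\<xi>. fourier \<psi> \<xi> = (\<Prod>j\<in>UNIV. 1 + (\<xi> $ j)\<^sup>2) * fourier \<phi> \<xi>"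
    by blast
  define C where "C = (\<integral>x. cmod (\<psi> x) \<partial>lborel)"
  have "cmod (fourier \<phi> \<xi>) \<le> C * Pw \<xi>" for \<xi>
  proof -
    let ?Q = "\<Prod>j\<in>UNIV. 1 + (\<xi> $ j)\<^sup>2"
    have Q: "0 < ?Q" by (intro prod_pos) (auto intro: add_pos_nonneg)
    have cq: "(\<Prod>j\<in>UNIV. 1 + (complex_of_real (\<xi> $ j))\<^sup>2) = complex_of_real ?Q" by simp
    have e: "fourier \<psi> \<xi> = complex_of_real ?Q * fourier \<phi> \<xi>" using p(2)[of \<xi>] cq by metis
    have "?Q * cmod (fourier \<phi> \<xi>) = cmod (fourier \<psi> \<xi>)"
      unfolding e norm_mult norm_of_real using Q by simp
    also have "\<dots> \<le> C" unfolding C_def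
      by (rule fourier_norm_bound) (auto intro: schwartz_measurable schwartz_integrable p(1))
    finally show ?thesis using Q by (simp add: Pw_alt field_simps)
  qed
  then show ?thesis by blast
qed

lemma fourier_integrable:
  assumes f: "schwartz (\<phi> :: real^'n::finite \<Rightarrow> complex)"
  shows "integrable lborel (fourier \<phi>)"
proof -
  obtain C where C: "\<And>\<xi>. cmod (fourier \<phi> \<xi>) \<le> C * Pw \<xi>" using fourier_decay[OF f] by blast
  show ?thesis
  proof (rule Bochner_Integration.integrable_bound[where f="\<lambda>x. C * Pw x"])
    show "integrable lborel (\<lambda>x. C * Pw x)" by (intro integrable_mult_right Pw_integrable)
    show "fourier \<phi> \<in> borel_measurable lborel"
      using fourier_measurable[OF schwartz_measurable[OF f]] by simp
    show "AE x in lborel. norm (fourier \<phi> x) \<le> norm (C * Pw x)"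
      using C by (auto intro!: always_eventually) (metis abs_ge_self dual_order.trans norm_mult real_norm_def)
  qed
qed

lemma inv_fourier_eq:
  fixes \<phi> :: "real^'n::finite \<Rightarrow> complex"
  shows "inv_fourier \<phi> \<xi> = complex_of_real ((2 * pi) powr (- real CARD('n))) * fourier \<phi> (- \<xi>)"
  unfolding inv_fourier_def fourier_def by (simp add: inner_commute)

lemma inv_fourier_integrable:
  assumes f: "schwartz (\<phi> :: real^'n::finite \<Rightarrow> complex)"
  shows "integrable lborel (inv_fourier \<phi>)" and "inv_fourier \<phi> \<in> borel_measurable borel"
proof -
  have [measurable]: "fourier \<phi> \<in> borel_measurable borel"
    using fourier_measurable[OF schwartz_measurable[OF f]] .
  have "integrable lborel (\<lambda>x. fourier \<phi> (0 + (-1) *\<^sub>R x))"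
    using integral_vec_affine(2)[of "-1" "fourier \<phi>" 0] fourier_integrable[OF f] by simp
  then have "integrable lborel (\<lambda>x. fourier \<phi> (- x))" by simp
  then show "integrable lborel (inv_fourier \<phi>)"
    unfolding inv_fourier_eq[abs_def] by (intro integrable_mult_right)
  show "inv_fourier \<phi> \<in> borel_measurable borel"
    unfolding inv_fourier_eq[abs_def] by measurable
qed

lemma cis_sum: "finite A \<Longrightarrow> cis (\<Sum>b\<in>A. f b) = (\<Prod>b\<in>A. cis (f b))"
  by (induction A rule: finite_induct) (auto simp: cis_mult[symmetric])

lemma std_char:
  "(\<integral>u. complex_of_real (std_normal_density u) * cis (t * u) \<partial>lborel) = complex_of_real (exp (- (t\<^sup>2) / 2))"
    and std_char_int: "integrable lborel (\<lambda>u. complex_of_real (std_normal_density u) * cis (t * u))"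
proof -
  have "char std_normal_distribution t = complex_of_real (exp (- (t^2) / 2))"
    by (simp add: char_std_normal_distribution)
  moreover have "char std_normal_distribution t = (\<integral>u. complex_of_real (std_normal_density u) * cis (t * u) \<partial>lborel)"
    unfolding char_def
    by (subst integral_density) (auto simp: cis_conv_exp scaleR_conv_of_real)
  ultimately show "(\<integral>u. complex_of_real (std_normal_density u) * cis (t * u) \<partial>lborel) = complex_of_real (exp (- (t\<^sup>2) / 2))"
    by simp
  show "integrable lborel (\<lambda>u. complex_of_real (std_normal_density u) * cis (t * u))"
    by (rule Bochner_Integration.integrable_bound[where f="std_normal_density"])
       (auto simp: norm_mult)
qed

lemma gauss1d:
  fixes \<epsilon> s :: real
  assumes e: "\<epsilon> > 0"
  shows "integrable lborel (\<lambda>t. complex_of_real (exp (- (\<epsilon> * t)\<^sup>2 / 2)) * cis (s * t))"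
    and "(\<integral>t. complex_of_real (exp (- (\<epsilon> * t)\<^sup>2 / 2)) * cis (s * t) \<partial>lborel)
         = complex_of_real (sqrt (2 * pi) / \<epsilon> * exp (- (s / \<epsilon>)\<^sup>2 / 2))"
proof -
  let ?g = "\<lambda>t. complex_of_real (exp (- (\<epsilon> * t)\<^sup>2 / 2)) * cis (s * t)"
  have eq: "?g (0 + (1 / \<epsilon>) * u) = complex_of_real (sqrt (2 * pi)) * (complex_of_real (std_normal_density u) * cis ((s / \<epsilon>) * u))" for u
    using e by (simp add: std_normal_density_def field_simps)
  have "integrable lborel (\<lambda>u. ?g (0 + (1 / \<epsilon>) * u))"
    unfolding eq by (intro integrable_mult_right std_char_int)
  then show "integrable lborel ?g"
    using lborel_integrable_real_affine_iff[of "1/\<epsilon>" ?g 0] e by simp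
  have "integral\<^sup>L lborel ?g = \<bar>1/\<epsilon>\<bar> *\<^sub>R (\<integral>u. ?g (0 + (1 / \<epsilon>) * u) \<partial>lborel)"
    using e by (intro lborel_integral_real_affine) simp
  also have "\<dots> = (1/\<epsilon>) *\<^sub>R (complex_of_real (sqrt (2 * pi)) * complex_of_real (exp (- (s / \<epsilon>)\<^sup>2 / 2)))"
    unfolding eq using e by (subst integral_mult_right_zero, subst std_char) simp
  finally show "integral\<^sup>L lborel ?g = complex_of_real (sqrt (2 * pi) / \<epsilon> * exp (- (s / \<epsilon>)\<^sup>2 / 2))"
    by (simp add: scaleR_conv_of_real)
qed

definition Gn :: "real \<Rightarrow> real^'n::finite \<Rightarrow> real" where
  "Gn \<epsilon> \<xi> = (\<Prod>b\<in>Basis. exp (- (\<epsilon> * (\<xi> \<bullet> b))\<^sup>2 / 2))"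

lemma Gn_eq: "Gn \<epsilon> \<xi> = exp (- (\<epsilon>\<^sup>2 / 2) * (norm \<xi>)\<^sup>2)"
proof -
  have "(norm \<xi>)\<^sup>2 = \<xi> \<bullet> \<xi>" by (rule power2_norm_eq_inner)
  also have "\<dots> = (\<Sum>b\<in>Basis. (\<xi> \<bullet> b) * (\<xi> \<bullet> b))" by (rule euclidean_inner)
  finally have "(norm \<xi>)\<^sup>2 = (\<Sum>b\<in>Basis. (\<xi> \<bullet> b)\<^sup>2)" by (simp add: power2_eq_square)
  then have "- (\<epsilon>\<^sup>2 / 2) * (norm \<xi>)\<^sup>2 = (\<Sum>b\<in>Basis. - (\<epsilon> * (\<xi> \<bullet> b))\<^sup>2 / 2)"
    by (simp add: sum_distrib_left sum_divide_distrib power_mult_distrib sum_negf)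
  then show ?thesis unfolding Gn_def by (simp add: exp_sum)
qed

lemma Gn_pos: "0 < Gn \<epsilon> \<xi>" by (simp add: Gn_eq)
lemma Gn_le1: "Gn \<epsilon> \<xi> \<le> 1" by (simp add: Gn_eq)
lemma Gn_measurable[measurable]: "Gn \<epsilon> \<in> borel_measurable borel"
  unfolding Gn_def by measurable

lemma gauss_nd:
  fixes \<epsilon> :: real and z :: "real^'n::finite"
  assumes e: "\<epsilon> > 0"
  shows "integrable lborel (\<lambda>\<xi>. complex_of_real (Gn \<epsilon> \<xi>) * cis (z \<bullet> \<xi>))"
    and "(\<integral>\<xi>. complex_of_real (Gn \<epsilon> \<xi>) * cis (z \<bullet> \<xi>) \<partial>lborel)
         = complex_of_real ((sqrt (2 * pi) / \<epsilon>) ^ CARD('n) * Gn (1 / \<epsilon>) z)"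
proof -
  define f where "f b t = complex_of_real (exp (- (\<epsilon> * t)\<^sup>2 / 2)) * cis ((z \<bullet> b) * t)" for b :: "real^'n" and t
  have eq: "complex_of_real (Gn \<epsilon> \<xi>) * cis (z \<bullet> \<xi>) = (\<Prod>b\<in>Basis. f b (\<xi> \<bullet> b))" for \<xi>
    unfolding f_def Gn_def euclidean_inner[of z \<xi>]
    by (simp add: cis_sum prod.distrib)
  have int: "integrable lborel (f b)" for b unfolding f_def using gauss1d(1)[OF e] .
  show "integrable lborel (\<lambda>\<xi>. complex_of_real (Gn \<epsilon> \<xi>) * cis (z \<bullet> \<xi>))"
    unfolding eq by (rule lborel_vec_prod(1)) (rule int)
  have "(\<integral>\<xi>. complex_of_real (Gn \<epsilon> \<xi>) * cis (z \<bullet> \<xi>) \<partial>lborel) = (\<Prod>b\<in>Basis. integral\<^sup>L lborel (f b))"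
    unfolding eq by (rule lborel_vec_prod(2)) (rule int)
  also have "\<dots> = (\<Prod>b\<in>(Basis::(real^'n) set). complex_of_real (sqrt (2 * pi) / \<epsilon> * exp (- ((z \<bullet> b) / \<epsilon>)\<^sup>2 / 2)))"
    unfolding f_def using gauss1d(2)[OF e] by simp
  also have "\<dots> = complex_of_real ((sqrt (2 * pi) / \<epsilon>) ^ CARD('n) * Gn (1 / \<epsilon>) z)"
  proof -
    have "(\<Prod>b\<in>(Basis::(real^'n) set). complex_of_real (sqrt (2 * pi) / \<epsilon> * exp (- ((z \<bullet> b) / \<epsilon>)\<^sup>2 / 2)))
       = (\<Prod>b\<in>(Basis::(real^'n) set). complex_of_real (sqrt (2 * pi) / \<epsilon>) * complex_of_real (exp (- ((1 / \<epsilon>) * (z \<bullet> b))\<^sup>2 / 2)))"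
      by (intro prod.cong refl) (simp add: field_simps)
    also have "\<dots> = complex_of_real (sqrt (2 * pi) / \<epsilon>) ^ CARD('n) * (\<Prod>b\<in>(Basis::(real^'n) set). complex_of_real (exp (- ((1 / \<epsilon>) * (z \<bullet> b))\<^sup>2 / 2)))"
      by (simp only: prod.distrib prod_constant) simp
    also have "\<dots> = complex_of_real ((sqrt (2 * pi) / \<epsilon>) ^ CARD('n) * Gn (1 / \<epsilon>) z)"
      unfolding Gn_def of_real_mult of_real_prod of_real_power by simp
    finally show ?thesis .
  qed
  finally show "(\<integral>\<xi>. complex_of_real (Gn \<epsilon> \<xi>) * cis (z \<bullet> \<xi>) \<partial>lborel)
         = complex_of_real ((sqrt (2 * pi) / \<epsilon>) ^ CARD('n) * Gn (1 / \<epsilon>) z)" .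
qed

definition Gam :: "real^'n::finite \<Rightarrow> real" where
  "Gam z = (\<Prod>b\<in>Basis. std_normal_density (z \<bullet> b))"

lemma Gam_measurable[measurable]: "Gam \<in> borel_measurable borel"
  unfolding Gam_def by measurable

lemma Gam_nonneg: "0 \<le> Gam z" unfolding Gam_def by (intro prod_nonneg) auto

lemma Gam_integrable: "integrable lborel Gam" and Gam_integral: "integral\<^sup>L lborel Gam = 1"
  unfolding Gam_def[abs_def]
  using lborel_vec_prod[of "\<lambda>_. std_normal_density"] by auto

lemma Gam_Gn: "Gam z = (1 / sqrt (2 * pi)) ^ CARD('n) * Gn 1 (z :: real^'n::finite)"
  unfolding Gam_def Gn_def by (simp add: std_normal_density_def prod.distrib prod_dividef power_one_over)

lemma integrable_pair_mult:
  fixes f g :: "real^'n::finite \<Rightarrow> real"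
  assumes fi: "integrable lborel f" and gi: "integrable lborel g"
  shows "integrable (lborel \<Otimes>\<^sub>M lborel) (\<lambda>(a, b). f a * g b)"
proof -
  have [measurable]: "f \<in> borel_measurable borel" "g \<in> borel_measurable borel"
    using fi gi by (auto dest: borel_measurable_integrable)
  have "(\<integral>\<^sup>+ z. ennreal (norm ((\<lambda>(a, b). f a * g b) z)) \<partial>(lborel \<Otimes>\<^sub>M lborel))
      = (\<integral>\<^sup>+ a. \<integral>\<^sup>+ b. ennreal (norm (f a)) * ennreal (norm (g b)) \<partial>lborel \<partial>lborel)"
  proof -
    have m: "(\<lambda>z. ennreal (norm (f (fst z))) * ennreal (norm (g (snd z)))) \<in> borel_measurable (lborel \<Otimes>\<^sub>M lborel)"
      by measurable
    have "(\<integral>\<^sup>+ a. \<integral>\<^sup>+ b. ennreal (norm (f a)) * ennreal (norm (g b)) \<partial>lborel \<partial>lborel)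
        = (\<integral>\<^sup>+ z. ennreal (norm (f (fst z))) * ennreal (norm (g (snd z))) \<partial>(lborel \<Otimes>\<^sub>M lborel))"
      using lborel.nn_integral_fst[OF m] by simp
    then show ?thesis by (simp add: abs_mult ennreal_mult case_prod_beta)
  qed
  also have "\<dots> = (\<integral>\<^sup>+ a. ennreal (norm (f a)) * (\<integral>\<^sup>+ b. ennreal (norm (g b)) \<partial>lborel) \<partial>lborel)"
    by (subst nn_integral_cmult) auto
  also have "\<dots> = (\<integral>\<^sup>+ a. ennreal (norm (f a)) \<partial>lborel) * (\<integral>\<^sup>+ b. ennreal (norm (g b)) \<partial>lborel)"
    by (subst nn_integral_multc) auto
  also have "\<dots> < \<infinity>"
    using fi gi unfolding integrable_iff_bounded by (auto simp: ennreal_mult_less_top)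
  finally show ?thesis
    unfolding integrable_iff_bounded by (auto simp: case_prod_beta)
qed

lemma Gn_integrable: "\<epsilon> > 0 \<Longrightarrow> integrable lborel (Gn \<epsilon> :: real^'n::finite \<Rightarrow> real)"
proof -
  assume e: "\<epsilon> > 0"
  have "integrable lborel (\<lambda>\<xi>::real^'n. norm (complex_of_real (Gn \<epsilon> \<xi>) * cis (0 \<bullet> \<xi>)))"
    by (intro integrable_norm gauss_nd(1)[OF e])
  then show ?thesis by (simp add: norm_mult Gn_pos less_imp_le)
qed

lemma inv_fourier_lborel:
  fixes \<phi> :: "real^'n::finite \<Rightarrow> complex"
  assumes [measurable]: "\<phi> \<in> borel_measurable borel"
  shows "inv_fourier \<phi> \<xi> = complex_of_real ((2 * pi) powr (- real CARD('n))) * (\<integral>y. \<phi> y * cis (y \<bullet> \<xi>) \<partial>lborel)"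
  unfolding inv_fourier_def by (subst integral_completion) (auto simp: inner_commute)

lemma const_calc: "(2 * pi) powr (- real n) * sqrt (2 * pi) ^ n = (1 / sqrt (2 * pi)) ^ n"
proof -
  have s: "sqrt (2 * pi) ^ 2 = 2 * pi" by simp
  have "(2 * pi) powr (- real n) = 1 / (2 * pi) ^ n"
    by (simp add: powr_minus powr_realpow divide_inverse)
  also have "(2 * pi) ^ n = sqrt (2 * pi) ^ n * sqrt (2 * pi) ^ n"
    by (metis power_mult_distrib s power2_eq_square power_mult mult.commute power_even_eq)
  finally show ?thesis by (simp add: power_one_over)
qed

lemma inv_reg:
  fixes \<phi> :: "real^'n::finite \<Rightarrow> complex"
  assumes f: "schwartz \<phi>" and e: "\<epsilon> > 0"
  shows "(\<integral>\<xi>. inv_fourier \<phi> \<xi> * complex_of_real (Gn \<epsilon> \<xi>) * cis (- (x \<bullet> \<xi>)) \<partial>lborel)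
       = (\<integral>u. \<phi> (x + \<epsilon> *\<^sub>R u) * complex_of_real (Gam u) \<partial>lborel)"
proof -
  have [measurable]: "\<phi> \<in> borel_measurable borel" using schwartz_measurable[OF f] .
  have phi_int: "integrable lborel \<phi>" using schwartz_integrable[OF f] .
  define c where "c = complex_of_real ((2 * pi) powr (- real CARD('n)))"
  define K where "K = (sqrt (2 * pi) / \<epsilon>) ^ CARD('n)"
  define H where "H \<xi> y = \<phi> y * (complex_of_real (Gn \<epsilon> \<xi>) * cis ((y - x) \<bullet> \<xi>))" for \<xi> y :: "real^'n"
  have Hm[measurable]: "(\<lambda>(\<xi>, y). H \<xi> y) \<in> borel_measurable (lborel \<Otimes>\<^sub>M lborel)"
    unfolding H_def by measurable
  have Hint: "integrable (lborel \<Otimes>\<^sub>M lborel) (\<lambda>(\<xi>, y). H \<xi> y)"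
  proof (rule Bochner_Integration.integrable_bound[OF integrable_pair_mult[OF Gn_integrable[OF e] integrable_norm[OF phi_int]]])
    show "(\<lambda>(\<xi>, y). H \<xi> y) \<in> borel_measurable (lborel \<Otimes>\<^sub>M lborel)" by (rule Hm)
    show "AE z in lborel \<Otimes>\<^sub>M lborel. norm ((\<lambda>(\<xi>, y). H \<xi> y) z) \<le> norm ((\<lambda>(a, b). Gn \<epsilon> a * norm (\<phi> b)) z)"
      by (intro always_eventually allI) (auto simp: H_def norm_mult Gn_pos less_imp_le)
  qed
  have step1: "inv_fourier \<phi> \<xi> * complex_of_real (Gn \<epsilon> \<xi>) * cis (- (x \<bullet> \<xi>)) = c * (\<integral>y. H \<xi> y \<partial>lborel)" for \<xi>
  proof -
    have "inv_fourier \<phi> \<xi> * complex_of_real (Gn \<epsilon> \<xi>) * cis (- (x \<bullet> \<xi>))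
        = c * ((\<integral>y. \<phi> y * cis (y \<bullet> \<xi>) \<partial>lborel) * (complex_of_real (Gn \<epsilon> \<xi>) * cis (- (x \<bullet> \<xi>))))"
      by (simp add: inv_fourier_lborel c_def mult_ac)
    also have "(\<integral>y. \<phi> y * cis (y \<bullet> \<xi>) \<partial>lborel) * (complex_of_real (Gn \<epsilon> \<xi>) * cis (- (x \<bullet> \<xi>)))
        = (\<integral>y. \<phi> y * cis (y \<bullet> \<xi>) * (complex_of_real (Gn \<epsilon> \<xi>) * cis (- (x \<bullet> \<xi>))) \<partial>lborel)"
      by (rule integral_mult_left_zero[symmetric])
    also have "\<dots> = (\<integral>y. H \<xi> y \<partial>lborel)"
      by (intro Bochner_Integration.integral_cong refl)
         (simp add: H_def inner_diff_left cis_mult mult_ac)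
    finally show ?thesis .
  qed
  have inner: "(\<integral>\<xi>. H \<xi> y \<partial>lborel) = \<phi> y * complex_of_real (K * Gn (1 / \<epsilon>) (y - x))" for y
  proof -
    have "(\<integral>\<xi>. H \<xi> y \<partial>lborel) = \<phi> y * (\<integral>\<xi>. complex_of_real (Gn \<epsilon> \<xi>) * cis ((y - x) \<bullet> \<xi>) \<partial>lborel)"
      unfolding H_def by (rule integral_mult_right_zero)
    also have "\<dots> = \<phi> y * complex_of_real (K * Gn (1 / \<epsilon>) (y - x))"
      unfolding K_def using gauss_nd(2)[OF e, of "y - x"] by simp
    finally show ?thesis .
  qed
  have "(\<integral>\<xi>. inv_fourier \<phi> \<xi> * complex_of_real (Gn \<epsilon> \<xi>) * cis (- (x \<bullet> \<xi>)) \<partial>lborel)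
      = c * (\<integral>\<xi>. (\<integral>y. H \<xi> y \<partial>lborel) \<partial>lborel)"
    unfolding step1 by (rule integral_mult_right_zero)
  also have "(\<integral>\<xi>. (\<integral>y. H \<xi> y \<partial>lborel) \<partial>lborel) = (\<integral>y. (\<integral>\<xi>. H \<xi> y \<partial>lborel) \<partial>lborel)"
    using lborel_pair.Fubini_integral[OF Hint] by simp
  also have "\<dots> = (\<integral>y. \<phi> y * complex_of_real (K * Gn (1 / \<epsilon>) (y - x)) \<partial>lborel)"
    unfolding inner ..
  also have "\<dots> = (\<bar>\<epsilon>\<bar> ^ CARD('n)) *\<^sub>R (\<integral>u. \<phi> (x + \<epsilon> *\<^sub>R u) * complex_of_real (K * Gn (1 / \<epsilon>) ((x + \<epsilon> *\<^sub>R u) - x)) \<partial>lborel)"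
    using e by (intro integral_vec_affine(1)) auto
  also have "(\<lambda>u. \<phi> (x + \<epsilon> *\<^sub>R u) * complex_of_real (K * Gn (1 / \<epsilon>) ((x + \<epsilon> *\<^sub>R u) - x)))
      = (\<lambda>u. \<phi> (x + \<epsilon> *\<^sub>R u) * complex_of_real (K * Gn 1 u))"
    using e by (auto simp: Gn_def fun_eq_iff)
  finally have A: "(\<integral>\<xi>. inv_fourier \<phi> \<xi> * complex_of_real (Gn \<epsilon> \<xi>) * cis (- (x \<bullet> \<xi>)) \<partial>lborel)
      = c * ((\<bar>\<epsilon>\<bar> ^ CARD('n)) *\<^sub>R (\<integral>u. \<phi> (x + \<epsilon> *\<^sub>R u) * complex_of_real (K * Gn 1 u) \<partial>lborel))" .
  define I where "I = (\<integral>u. \<phi> (x + \<epsilon> *\<^sub>R u) * complex_of_real (Gn 1 u) \<partial>lborel)"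
  have B: "(\<integral>u. \<phi> (x + \<epsilon> *\<^sub>R u) * complex_of_real (K * Gn 1 u) \<partial>lborel) = complex_of_real K * I"
  proof -
    have "(\<integral>u. \<phi> (x + \<epsilon> *\<^sub>R u) * complex_of_real (K * Gn 1 u) \<partial>lborel)
        = (\<integral>u. complex_of_real K * (\<phi> (x + \<epsilon> *\<^sub>R u) * complex_of_real (Gn 1 u)) \<partial>lborel)"
      by (intro Bochner_Integration.integral_cong refl) (simp add: mult_ac)
    then show ?thesis unfolding I_def by (simp only: integral_mult_right_zero)
  qed
  have C: "(\<integral>u. \<phi> (x + \<epsilon> *\<^sub>R u) * complex_of_real (Gam u) \<partial>lborel) = complex_of_real ((1 / sqrt (2 * pi)) ^ CARD('n)) * I"
  proof -
    have "(\<integral>u. \<phi> (x + \<epsilon> *\<^sub>R u) * complex_of_real (Gam u) \<partial>lborel)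
        = (\<integral>u. complex_of_real ((1 / sqrt (2 * pi)) ^ CARD('n)) * (\<phi> (x + \<epsilon> *\<^sub>R u) * complex_of_real (Gn 1 u)) \<partial>lborel)"
      by (intro Bochner_Integration.integral_cong refl) (simp add: Gam_Gn mult_ac)
    then show ?thesis unfolding I_def by (simp only: integral_mult_right_zero)
  qed
  have D: "(2 * pi) powr (- real CARD('n)) * \<epsilon> ^ CARD('n) * K = (1 / sqrt (2 * pi)) ^ CARD('n)"
    unfolding K_def using e const_calc[of "CARD('n)"] by (simp add: power_divide)
  have "c * ((\<bar>\<epsilon>\<bar> ^ CARD('n)) *\<^sub>R (complex_of_real K * I))
      = complex_of_real ((2 * pi) powr (- real CARD('n)) * \<epsilon> ^ CARD('n) * K) * I"
    using e by (simp add: c_def scaleR_conv_of_real mult_ac)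
  then show ?thesis unfolding A B C D .
qed

lemma fourier_inversion:
  fixes \<phi> :: "real^'n::finite \<Rightarrow> complex"
  assumes f: "schwartz \<phi>"
  shows "fourier (inv_fourier \<phi>) x = \<phi> x"
proof -
  define \<psi> where "\<psi> = inv_fourier \<phi>"
  have [measurable]: "\<psi> \<in> borel_measurable borel" unfolding \<psi>_def using inv_fourier_integrable(2)[OF f] .
  have \<psi>i: "integrable lborel \<psi>" unfolding \<psi>_def using inv_fourier_integrable(1)[OF f] .
  have [measurable]: "\<phi> \<in> borel_measurable borel" using schwartz_measurable[OF f] .
  define e :: "nat \<Rightarrow> real" where "e k = inverse (real (Suc k))" for k
  have e0: "0 < e k" for k unfolding e_def by simp
  have el: "e \<longlonglongrightarrow> 0" unfolding e_def by (rule LIMSEQ_inverse_real_of_nat)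
  have La: "(\<lambda>k. \<integral>\<xi>. \<psi> \<xi> * complex_of_real (Gn (e k) \<xi>) * cis (- (x \<bullet> \<xi>)) \<partial>lborel) \<longlonglongrightarrow> fourier \<psi> x"
    unfolding fourier_lborel[OF \<open>\<psi> \<in> borel_measurable borel\<close>] inner_commute[of _ x]
  proof (rule integral_dominated_convergence[where w = "\<lambda>\<xi>. norm (\<psi> \<xi>)"])
    show "integrable lborel (\<lambda>\<xi>. norm (\<psi> \<xi>))" using \<psi>i by (rule integrable_norm)
    show "AE \<xi> in lborel. (\<lambda>k. \<psi> \<xi> * complex_of_real (Gn (e k) \<xi>) * cis (- (x \<bullet> \<xi>))) \<longlonglongrightarrow> \<psi> \<xi> * cis (- (x \<bullet> \<xi>))"
    proof (intro always_eventually allI)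
      fix \<xi> :: "real^'n"
      have "(\<lambda>k. exp (- ((e k)\<^sup>2 / 2) * (norm \<xi>)\<^sup>2)) \<longlonglongrightarrow> exp (- (0\<^sup>2 / 2) * (norm \<xi>)\<^sup>2)"
        by (intro tendsto_intros el) auto
      then have "(\<lambda>k. Gn (e k) \<xi>) \<longlonglongrightarrow> 1" by (simp add: Gn_eq)
      then have "(\<lambda>k. \<psi> \<xi> * complex_of_real (Gn (e k) \<xi>) * cis (- (x \<bullet> \<xi>))) \<longlonglongrightarrow> \<psi> \<xi> * complex_of_real 1 * cis (- (x \<bullet> \<xi>))"
        by (intro tendsto_intros)
      then show "(\<lambda>k. \<psi> \<xi> * complex_of_real (Gn (e k) \<xi>) * cis (- (x \<bullet> \<xi>))) \<longlonglongrightarrow> \<psi> \<xi> * cis (- (x \<bullet> \<xi>))"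
        by simp
    qed
    show "AE \<xi> in lborel. norm (\<psi> \<xi> * complex_of_real (Gn (e k) \<xi>) * cis (- (x \<bullet> \<xi>))) \<le> norm (\<psi> \<xi>)" for k
      by (intro always_eventually allI)
         (simp add: norm_mult Gn_pos less_imp_le Gn_le1 mult_left_le)
  qed auto
  obtain Mb where Mb: "\<And>y. cmod (\<phi> y) \<le> Mb" using schwartz_bound0[OF f] by blast
  have Lb: "(\<lambda>k. \<integral>u. \<phi> (x + e k *\<^sub>R u) * complex_of_real (Gam u) \<partial>lborel) \<longlonglongrightarrow> \<phi> x"
  proof -
    have wi: "integrable lborel (\<lambda>u. Mb * Gam u)" by (intro integrable_mult_right Gam_integrable)
    have ct: "isCont \<phi> y" for y
      using schwartz_continuous[OF f] by (simp add: continuous_on_eq_continuous_at)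
    have ae: "AE u in lborel. (\<lambda>k. \<phi> (x + e k *\<^sub>R u) * complex_of_real (Gam u)) \<longlonglongrightarrow> \<phi> x * complex_of_real (Gam u)"
    proof (intro always_eventually allI tendsto_mult_right)
      fix u :: "real^'n"
      have "(\<lambda>k. x + e k *\<^sub>R u) \<longlonglongrightarrow> x + 0 *\<^sub>R u" by (intro tendsto_intros el)
      then show "(\<lambda>k. \<phi> (x + e k *\<^sub>R u)) \<longlonglongrightarrow> \<phi> x"
        using isCont_tendsto_compose[OF ct] by simp
    qed
    have bd: "AE u in lborel. norm (\<phi> (x + e k *\<^sub>R u) * complex_of_real (Gam u)) \<le> Mb * Gam u" for k
      by (intro always_eventually allI)
         (simp add: norm_mult Gam_nonneg mult_right_mono Mb)
    have m1: "(\<lambda>u. \<phi> x * complex_of_real (Gam u)) \<in> borel_measurable lborel" by measurable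
    have m2: "(\<lambda>u. \<phi> (x + e k *\<^sub>R u) * complex_of_real (Gam u)) \<in> borel_measurable lborel" for k by measurable
    have "(\<lambda>k. \<integral>u. \<phi> (x + e k *\<^sub>R u) * complex_of_real (Gam u) \<partial>lborel) \<longlonglongrightarrow> (\<integral>u. \<phi> x * complex_of_real (Gam (u::real^'n)) \<partial>lborel)"
      by (rule integral_dominated_convergence[OF m1 m2 wi ae bd])
    also have "(\<integral>u. \<phi> x * complex_of_real (Gam (u::real^'n)) \<partial>lborel) = \<phi> x"
      by (simp add: integral_mult_right_zero Gam_integral)
    finally show ?thesis .
  qed
  have eq: "(\<lambda>k. \<integral>\<xi>. \<psi> \<xi> * complex_of_real (Gn (e k) \<xi>) * cis (- (x \<bullet> \<xi>)) \<partial>lborel)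
      = (\<lambda>k. \<integral>u. \<phi> (x + e k *\<^sub>R u) * complex_of_real (Gam u) \<partial>lborel)"
    unfolding \<psi>_def by (intro ext inv_reg[OF f e0])
  have "(\<lambda>k. \<integral>u. \<phi> (x + e k *\<^sub>R u) * complex_of_real (Gam u) \<partial>lborel) \<longlonglongrightarrow> fourier \<psi> x"
    using La unfolding eq .
  from LIMSEQ_unique[OF this Lb] show ?thesis unfolding \<psi>_def .
qed

lemma borel_lebesgue: "f \<in> borel_measurable borel \<Longrightarrow> f \<in> borel_measurable lebesgue"
  by (rule measurable_completion) simp

lemma main_identity:
  fixes u \<phi> :: "real^'n::finite \<Rightarrow> complex"
  assumes u: "schwartz u" and f: "schwartz \<phi>"
  shows "integrable lborel (\<lambda>\<xi>. (fourier u \<xi> * inv_fourier \<phi> \<xi>) * cis (- (h \<bullet> \<xi>)))"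
    and "(\<integral>\<xi>. (fourier u \<xi> * inv_fourier \<phi> \<xi>) * cis (- (h \<bullet> \<xi>)) \<partial>lborel)
         = (\<integral>x. u (x - h) * \<phi> x \<partial>lborel)"
proof -
  have [measurable]: "u \<in> borel_measurable borel" using schwartz_measurable[OF u] .
  have [measurable]: "\<phi> \<in> borel_measurable borel" using schwartz_measurable[OF f] .
  define v where "v x = u (x + (- h))" for x
  define \<psi> where "\<psi> = inv_fourier \<phi>"
  have [measurable]: "v \<in> borel_measurable borel" unfolding v_def by measurable
  have vi: "integrable lborel v" unfolding v_def
    by (rule integrable_translate) (auto intro: schwartz_integrable[OF u])
  have [measurable]: "\<psi> \<in> borel_measurable borel" unfolding \<psi>_def using inv_fourier_integrable(2)[OF f] .
  have \<psi>i: "integrable lborel \<psi>" unfolding \<psi>_def using inv_fourier_integrable(1)[OF f] .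
  have [measurable]: "fourier v \<in> borel_measurable borel" by (rule fourier_measurable) measurable
  have eq1: "(fourier u \<xi> * inv_fourier \<phi> \<xi>) * cis (- (h \<bullet> \<xi>)) = fourier v \<xi> * \<psi> \<xi>" for \<xi>
    unfolding v_def \<psi>_def by (subst fourier_translate) (auto simp: mult_ac)
  obtain Cv where Cv: "\<And>\<xi>. cmod (fourier v \<xi>) \<le> Cv"
    using fourier_norm_bound[OF \<open>v \<in> borel_measurable borel\<close> vi] by blast
  show "integrable lborel (\<lambda>\<xi>. (fourier u \<xi> * inv_fourier \<phi> \<xi>) * cis (- (h \<bullet> \<xi>)))"
    unfolding eq1
  proof (rule Bochner_Integration.integrable_bound[where f = "\<lambda>\<xi>. Cv * norm (\<psi> \<xi>)"])
    show "integrable lborel (\<lambda>\<xi>. Cv * norm (\<psi> \<xi>))" by (intro integrable_mult_right integrable_norm \<psi>i)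
    show "AE \<xi> in lborel. norm (fourier v \<xi> * \<psi> \<xi>) \<le> norm (Cv * norm (\<psi> \<xi>))"
      by (intro always_eventually allI)
         (metis Cv abs_ge_self mult_right_mono norm_ge_zero norm_mult order_trans real_norm_def)
  qed measurable
  define K where "K \<xi> x = v x * cis (- (x \<bullet> \<xi>)) * \<psi> \<xi>" for \<xi> x :: "real^'n"
  have Km[measurable]: "(\<lambda>(\<xi>, x). K \<xi> x) \<in> borel_measurable (lborel \<Otimes>\<^sub>M lborel)"
    unfolding K_def by measurable
  have Kint: "integrable (lborel \<Otimes>\<^sub>M lborel) (\<lambda>(\<xi>, x). K \<xi> x)"
  proof (rule Bochner_Integration.integrable_bound[OF integrable_pair_mult[OF integrable_norm[OF \<psi>i] integrable_norm[OF vi]]])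
    show "(\<lambda>(\<xi>, x). K \<xi> x) \<in> borel_measurable (lborel \<Otimes>\<^sub>M lborel)" by (rule Km)
    show "AE z in lborel \<Otimes>\<^sub>M lborel. norm ((\<lambda>(\<xi>, x). K \<xi> x) z) \<le> norm ((\<lambda>(a, b). norm (\<psi> a) * norm (v b)) z)"
      by (intro always_eventually allI) (auto simp: K_def norm_mult)
  qed
  have "(\<integral>\<xi>. (fourier u \<xi> * inv_fourier \<phi> \<xi>) * cis (- (h \<bullet> \<xi>)) \<partial>lborel)
      = (\<integral>\<xi>. fourier v \<xi> * \<psi> \<xi> \<partial>lborel)" unfolding eq1 ..
  also have "\<dots> = (\<integral>\<xi>. (\<integral>x. K \<xi> x \<partial>lborel) \<partial>lborel)"
    unfolding K_def fourier_lborel[OF \<open>v \<in> borel_measurable borel\<close>]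
    by (intro Bochner_Integration.integral_cong refl integral_mult_left_zero[symmetric])
  also have "\<dots> = (\<integral>x. (\<integral>\<xi>. K \<xi> x \<partial>lborel) \<partial>lborel)"
    using lborel_pair.Fubini_integral[OF Kint] by simp
  also have "\<dots> = (\<integral>x. v x * fourier \<psi> x \<partial>lborel)"
  proof (intro Bochner_Integration.integral_cong refl)
    fix x
    have "(\<integral>\<xi>. K \<xi> x \<partial>lborel) = v x * (\<integral>\<xi>. \<psi> \<xi> * cis (- (\<xi> \<bullet> x)) \<partial>lborel)"
      unfolding K_def by (subst integral_mult_right_zero[symmetric]) (simp add: mult_ac inner_commute)
    then show "(\<integral>\<xi>. K \<xi> x \<partial>lborel) = v x * fourier \<psi> x"
      by (simp add: fourier_lborel)
  qed
  also have "\<dots> = (\<integral>x. u (x - h) * \<phi> x \<partial>lborel)"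
    unfolding \<psi>_def fourier_inversion[OF f] v_def by simp
  finally show "(\<integral>\<xi>. (fourier u \<xi> * inv_fourier \<phi> \<xi>) * cis (- (h \<bullet> \<xi>)) \<partial>lborel)
         = (\<integral>x. u (x - h) * \<phi> x \<partial>lborel)" .
qed

definition gs :: "real \<Rightarrow> real^'n::finite \<Rightarrow> complex" where
  "gs \<beta> x = complex_of_real (exp (- \<beta> * (x \<bullet> x)))"

inductive cpoly :: "(real^'n::finite \<Rightarrow> complex) \<Rightarrow> bool" where
  cp_const: "cpoly (\<lambda>x. c)"
| cp_coord: "cpoly (\<lambda>x::real^'n. complex_of_real (x $ (j::'n)))"
| cp_add: "cpoly p \<Longrightarrow> cpoly q \<Longrightarrow> cpoly (\<lambda>x. p x + q x)"
| cp_mult: "cpoly p \<Longrightarrow> cpoly q \<Longrightarrow> cpoly (\<lambda>x. p x * q x)"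

lemma cpoly_deriv:
  fixes p :: "real^'n::finite \<Rightarrow> complex" and j :: 'n
  shows "cpoly p \<Longrightarrow> \<exists>q. cpoly q \<and> (\<forall>x. ((\<lambda>t. p (x + t *\<^sub>R axis j 1)) has_vector_derivative q x) (at 0))"
proof (induction p rule: cpoly.induct)
  case (cp_const c)
  show ?case by (intro exI[of _ "\<lambda>x. 0"] conjI cpoly.cp_const allI) (rule has_vector_derivative_const)
next
  case (cp_coord k)
  have "((\<lambda>t. complex_of_real (x $ k + t * axis j 1 $ k)) has_vector_derivative complex_of_real (axis j 1 $ k)) (at 0)" for x :: "real^'n"
    by (auto intro!: derivative_eq_intros)
  then show ?case
    by (intro exI[of _ "\<lambda>x. complex_of_real (axis j 1 $ k)"] conjI cpoly.cp_const allI) simp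
next
  case (cp_add p q)
  then obtain p' q' where p: "cpoly p'" "\<And>x. ((\<lambda>t. p (x + t *\<^sub>R axis j 1)) has_vector_derivative p' x) (at 0)"
    and q: "cpoly q'" "\<And>x. ((\<lambda>t. q (x + t *\<^sub>R axis j 1)) has_vector_derivative q' x) (at 0)" by blast
  show ?case
    by (intro exI[of _ "\<lambda>x. p' x + q' x"] conjI cpoly.cp_add p(1) q(1) allI has_vector_derivative_add p(2) q(2))
next
  case (cp_mult p q)
  then obtain p' q' where p: "cpoly p'" "\<And>x. ((\<lambda>t. p (x + t *\<^sub>R axis j 1)) has_vector_derivative p' x) (at 0)"
    and q: "cpoly q'" "\<And>x. ((\<lambda>t. q (x + t *\<^sub>R axis j 1)) has_vector_derivative q' x) (at 0)" by blast
  have "((\<lambda>t. p (x + t *\<^sub>R axis j 1) * q (x + t *\<^sub>R axis j 1)) has_vector_derivative p x * q' x + p' x * q x) (at 0)" for x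
    using has_vector_derivative_mult[OF p(2)[of x] q(2)[of x]] by simp
  then show ?case
    by (intro exI[of _ "\<lambda>x. p x * q' x + p' x * q x"] conjI allI cpoly.cp_add cpoly.cp_mult p(1) q(1) cp_mult.hyps) auto
qed

lemma cpoly_bound:
  fixes p :: "real^'n::finite \<Rightarrow> complex"
  shows "cpoly p \<Longrightarrow> \<exists>A d. 0 \<le> A \<and> (\<forall>x. cmod (p x) \<le> A * (1 + norm x) ^ d)"
proof (induction p rule: cpoly.induct)
  case (cp_const c) then show ?case by (intro exI[of _ "cmod c"] exI[of _ 0]) auto
next
  case (cp_coord j)
  have "cmod (complex_of_real (x $ j)) \<le> 1 * (1 + norm x) ^ 1" for x :: "real^'n"
    using component_le_norm_cart[of x j] by simp
  then show ?case by (intro exI[of _ 1] exI[of _ 1]) auto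
next
  case (cp_add p q)
  then obtain A1 d1 A2 d2 where b: "0 \<le> A1" "\<And>x. cmod (p x) \<le> A1 * (1 + norm x) ^ d1"
    "0 \<le> A2" "\<And>x. cmod (q x) \<le> A2 * (1 + norm x) ^ d2" by blast
  have "cmod (p x + q x) \<le> (A1 + A2) * (1 + norm x) ^ (d1 + d2)" for x
  proof -
    have g: "1 \<le> 1 + norm x" by simp
    have "(1 + norm x) ^ d1 \<le> (1 + norm x) ^ (d1 + d2)" "(1 + norm x) ^ d2 \<le> (1 + norm x) ^ (d1 + d2)"
      using g by (auto intro!: power_increasing)
    then have "A1 * (1 + norm x) ^ d1 + A2 * (1 + norm x) ^ d2 \<le> (A1 + A2) * (1 + norm x) ^ (d1 + d2)"
      using b(1,3) by (simp add: distrib_right add_mono mult_left_mono)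
    moreover have "cmod (p x + q x) \<le> A1 * (1 + norm x) ^ d1 + A2 * (1 + norm x) ^ d2"
      using b(2)[of x] b(4)[of x] norm_triangle_ineq[of "p x" "q x"] by linarith
    ultimately show ?thesis by linarith
  qed
  then show ?case using b(1,3) by (intro exI[of _ "A1 + A2"] exI[of _ "d1 + d2"]) auto
next
  case (cp_mult p q)
  then obtain A1 d1 A2 d2 where b: "0 \<le> A1" "\<And>x. cmod (p x) \<le> A1 * (1 + norm x) ^ d1"
    "0 \<le> A2" "\<And>x. cmod (q x) \<le> A2 * (1 + norm x) ^ d2" by blast
  have "cmod (p x * q x) \<le> (A1 * A2) * (1 + norm x) ^ (d1 + d2)" for x
  proof -
    have "cmod (p x * q x) \<le> (A1 * (1 + norm x) ^ d1) * (A2 * (1 + norm x) ^ d2)"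
      unfolding norm_mult by (intro mult_mono b(2) b(4)) (use b(1) in auto)
    then show ?thesis by (simp add: power_add mult_ac)
  qed
  then show ?case using b(1,3) by (intro exI[of _ "A1 * A2"] exI[of _ "d1 + d2"]) auto
qed

lemma gs_deriv:
  fixes x :: "real^'n::finite" and j :: 'n
  shows "((\<lambda>t. gs \<beta> (x + t *\<^sub>R axis j 1)) has_vector_derivative
      (complex_of_real (-2 * \<beta> * (x $ j)) * gs \<beta> x)) (at 0)"
proof -
  have eq: "(x + t *\<^sub>R axis j 1) \<bullet> (x + t *\<^sub>R axis j 1) = x \<bullet> x + 2 * t * (x $ j) + t^2" for t
    by (simp add: inner_add_left inner_add_right inner_axis inner_commute power2_eq_square algebra_simps)
  have "((\<lambda>t. exp (- \<beta> * (x \<bullet> x + 2 * t * (x $ j) + t^2))) has_field_derivative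
          exp (- \<beta> * (x \<bullet> x + 2 * 0 * (x $ j) + 0^2)) * (- \<beta> * (2 * (x $ j) + 2 * 0))) (at 0)"
    by (auto intro!: derivative_eq_intros)
  then have "((\<lambda>t. complex_of_real (exp (- \<beta> * (x \<bullet> x + 2 * t * (x $ j) + t^2)))) has_vector_derivative
          complex_of_real (exp (- \<beta> * (x \<bullet> x)) * (- \<beta> * (2 * (x $ j))))) (at 0)"
    using has_vector_derivative_of_real by fastforce
  then show ?thesis unfolding gs_def eq by (simp add: mult_ac)
qed

lemma gs_dlist:
  fixes \<beta> :: real and "is" :: "'n::finite list"
  shows "\<exists>p :: real^'n \<Rightarrow> complex. cpoly p \<and> dlist is (gs \<beta>) = (\<lambda>x. p x * gs \<beta> x)"
proof (induction "is")
  case Nil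
  show ?case by (intro exI[of _ "\<lambda>x. 1"] conjI cp_const) simp
next
  case (Cons i "is")
  then obtain p where p: "cpoly p" "dlist is (gs \<beta>) = (\<lambda>x. p x * gs \<beta> x)" by blast
  obtain q where q: "cpoly q" "\<And>x. ((\<lambda>t. p (x + t *\<^sub>R axis i 1)) has_vector_derivative q x) (at 0)"
    using cpoly_deriv[OF p(1), of i] by blast
  define r where "r x = p x * (complex_of_real (-2 * \<beta>) * complex_of_real (x $ i)) + q x" for x :: "real^'n"
  have r: "cpoly r" unfolding r_def by (intro cp_add cp_mult p(1) q(1) cp_const cp_coord)
  have pr: "partial i (\<lambda>x. p x * gs \<beta> x) x = r x * gs \<beta> x" for x
  proof -
    have "((\<lambda>t. p (x + t *\<^sub>R axis i 1) * gs \<beta> (x + t *\<^sub>R axis i 1)) has_vector_derivative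
          p x * (complex_of_real (-2 * \<beta> * (x $ i)) * gs \<beta> x) + q x * gs \<beta> x) (at 0)"
      using has_vector_derivative_mult[OF q(2)[of x] gs_deriv[of \<beta> x i]] by simp
    then show ?thesis unfolding partial_def r_def
      by (subst vector_derivative_at) (auto simp: algebra_simps)
  qed
  show ?case by (intro exI[of _ r] conjI r) (simp only: dlist.simps p(2), rule ext, rule pr)
qed

lemma exp_ge_pow: "0 \<le> (x::real) \<Longrightarrow> x ^ n / fact n \<le> exp x"
proof -
  assume x: "0 \<le> x"
  obtain t where t: "exp x = (\<Sum>m<Suc n. x ^ m / fact m) + exp t / fact (Suc n) * x ^ Suc n"
    using Maclaurin_exp_le[of x "Suc n"] by blast
  have "x ^ n / fact n \<le> (\<Sum>m<Suc n. x ^ m / fact m)"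
    by (rule member_le_sum[of n "{..<Suc n}" "\<lambda>m. x ^ m / fact m"]) (use x in auto)
  moreover have "0 \<le> exp t / fact (Suc n) * x ^ Suc n" using x by simp
  ultimately show ?thesis using t by linarith
qed

lemma gaussian_poly_bound:
  fixes \<beta> :: real
  assumes b: "\<beta> > 0"
  shows "\<exists>C. \<forall>r\<ge>0. (1 + r) ^ M * exp (- \<beta> * r\<^sup>2) \<le> C"
proof -
  have "(1 + r) ^ M * exp (- \<beta> * r\<^sup>2) \<le> 2 ^ M * (1 + fact M / \<beta> ^ M)" if r: "r \<ge> 0" for r
  proof -
    have p1: "(1 + r) ^ M \<le> 2 ^ M * (1 + r ^ (2 * M))"
    proof (cases "r \<le> 1")
      case True
      then have "(1 + r) ^ M \<le> 2 ^ M" by (intro power_mono) (use r in auto)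
      then show ?thesis using r by (smt (verit) mult_le_cancel_left1 zero_le_power zero_less_power)
    next
      case False
      then have "(1 + r) ^ M \<le> (2 * r) ^ M" by (intro power_mono) auto
      also have "\<dots> = 2 ^ M * r ^ M" by (simp add: power_mult_distrib)
      also have "r ^ M \<le> r ^ (2 * M)" using False by (intro power_increasing) auto
      then have "2 ^ M * r ^ M \<le> 2 ^ M * (1 + r ^ (2 * M))" by simp
      finally show ?thesis .
    qed
    have e1: "(\<beta> * r\<^sup>2) ^ M / fact M \<le> exp (\<beta> * r\<^sup>2)" using b r by (intro exp_ge_pow) simp
    have p2: "r ^ (2 * M) * exp (- \<beta> * r\<^sup>2) \<le> fact M / \<beta> ^ M"
    proof -
      have "r ^ (2 * M) = (r\<^sup>2) ^ M" by (simp add: power_mult)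
      also have "\<dots> = (\<beta> * r\<^sup>2) ^ M / \<beta> ^ M" using b by (simp add: power_mult_distrib)
      finally have "r ^ (2 * M) * exp (- \<beta> * r\<^sup>2) = ((\<beta> * r\<^sup>2) ^ M / fact M) / exp (\<beta> * r\<^sup>2) * (fact M / \<beta> ^ M)"
        by (simp add: exp_minus field_simps)
      also have "\<dots> \<le> 1 * (fact M / \<beta> ^ M)"
      proof (intro mult_right_mono)
        show "(\<beta> * r\<^sup>2) ^ M / fact M / exp (\<beta> * r\<^sup>2) \<le> 1"
          using e1 exp_gt_zero[of "\<beta> * r\<^sup>2"] by (simp add: pos_divide_le_eq mult.commute)
      qed (use b in auto)
      finally show ?thesis by simp
    qed
    have "(1 + r) ^ M * exp (- \<beta> * r\<^sup>2) \<le> 2 ^ M * (1 + r ^ (2 * M)) * exp (- \<beta> * r\<^sup>2)"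
      using p1 by (intro mult_right_mono) auto
    also have "\<dots> = 2 ^ M * (exp (- \<beta> * r\<^sup>2) + r ^ (2 * M) * exp (- \<beta> * r\<^sup>2))" by (simp add: algebra_simps)
    also have "\<dots> \<le> 2 ^ M * (1 + fact M / \<beta> ^ M)"
      using p2 b by (intro mult_left_mono add_mono) auto
    finally show ?thesis .
  qed
  then show ?thesis by blast
qed

lemma gs_schwartz:
  assumes b: "\<beta> > 0"
  shows "schwartz (gs \<beta> :: real^'n::finite \<Rightarrow> complex)"
  unfolding schwartz_def
proof (intro conjI allI)
  fix "is" and i :: 'n and x :: "real^'n"
  obtain p :: "real^'n \<Rightarrow> complex" where p: "cpoly p" "dlist is (gs \<beta>) = (\<lambda>x. p x * gs \<beta> x)" using gs_dlist by blast
  obtain q where q: "cpoly q" "\<And>x. ((\<lambda>t. p (x + t *\<^sub>R axis i 1)) has_vector_derivative q x) (at 0)"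
    using cpoly_deriv[OF p(1), of i] by blast
  have "((\<lambda>t. p (x + t *\<^sub>R axis i 1) * gs \<beta> (x + t *\<^sub>R axis i 1)) has_vector_derivative
          p (x + 0 *\<^sub>R axis i 1) * (complex_of_real (-2 * \<beta> * (x $ i)) * gs \<beta> x) + q x * gs \<beta> (x + 0 *\<^sub>R axis i 1)) (at 0)"
    by (rule has_vector_derivative_mult[OF q(2)[of x] gs_deriv[of \<beta> x i]])
  then show "(\<lambda>t. dlist is (gs \<beta>) (x + t *\<^sub>R axis i 1)) differentiable (at 0)"
    unfolding p(2) by (rule differentiableI_vector)
next
  fix "is" and N :: nat
  obtain p :: "real^'n \<Rightarrow> complex" where p: "cpoly p" "dlist is (gs \<beta>) = (\<lambda>x. p x * gs \<beta> x)" using gs_dlist by blast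
  obtain A d where A: "0 \<le> A" "\<And>x. cmod (p x) \<le> A * (1 + norm x) ^ d" using cpoly_bound[OF p(1)] by blast
  obtain C where C: "\<And>r. r \<ge> 0 \<Longrightarrow> (1 + r) ^ (N + d) * exp (- \<beta> * r\<^sup>2) \<le> C"
    using gaussian_poly_bound[OF b] by blast
  have "(1 + norm x) ^ N * cmod (dlist is (gs \<beta>) x) \<le> A * C" for x :: "real^'n"
  proof -
    have g: "cmod (gs \<beta> x) = exp (- \<beta> * (norm x)\<^sup>2)" by (simp add: gs_def power2_norm_eq_inner)
    have "(1 + norm x) ^ N * cmod (dlist is (gs \<beta>) x) = (1 + norm x) ^ N * cmod (p x) * exp (- \<beta> * (norm x)\<^sup>2)"
      unfolding p(2) norm_mult g by simp
    also have "\<dots> \<le> (1 + norm x) ^ N * (A * (1 + norm x) ^ d) * exp (- \<beta> * (norm x)\<^sup>2)"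
      by (intro mult_right_mono mult_left_mono A(2)) auto
    also have "\<dots> = A * ((1 + norm x) ^ (N + d) * exp (- \<beta> * (norm x)\<^sup>2))" by (simp add: power_add mult_ac)
    also have "\<dots> \<le> A * C" by (intro mult_left_mono C A(1)) simp
    finally show ?thesis .
  qed
  then show "\<exists>B. \<forall>x. (1 + norm x) ^ N * cmod (dlist is (gs \<beta>) x) \<le> B" by blast
qed

lemma powr_subadd:
  fixes a b \<alpha> :: real
  assumes a: "0 \<le> a" and b: "0 \<le> b" and al: "0 < \<alpha>" "\<alpha> \<le> 1"
  shows "(a + b) powr \<alpha> \<le> a powr \<alpha> + b powr \<alpha>"
proof (cases "a = 0 \<or> b = 0")
  case True then show ?thesis using a b by auto
next
  case False
  then have ap: "0 < a" and bp: "0 < b" using a b by auto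
  have "(a + b) powr \<alpha> = (a + b) * (a + b) powr (\<alpha> - 1)"
    using powr_add[of "a+b" 1 "\<alpha> - 1"] ap bp by simp
  also have "\<dots> = a * (a + b) powr (\<alpha> - 1) + b * (a + b) powr (\<alpha> - 1)" by (simp add: distrib_right)
  also have "\<dots> \<le> a * a powr (\<alpha> - 1) + b * b powr (\<alpha> - 1)"
  proof (intro add_mono mult_left_mono)
    show "(a + b) powr (\<alpha> - 1) \<le> a powr (\<alpha> - 1)" using al ap bp by (intro powr_mono2') auto
    show "(a + b) powr (\<alpha> - 1) \<le> b powr (\<alpha> - 1)" using al ap bp by (intro powr_mono2') auto
  qed (use a b in auto)
  also have "\<dots> = a powr \<alpha> + b powr \<alpha>"
    using ap bp by (simp add: powr_add[symmetric] powr_mult_base)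
  finally show ?thesis .
qed

lemma weight_shift:
  fixes c \<alpha> :: real and x h :: "real^'n::finite"
  assumes c: "c > 0" and al: "0 < \<alpha>" "\<alpha> \<le> 1"
  shows "exp (c * norm x powr \<alpha>) \<le> exp (c * norm h powr \<alpha>) * exp (c * norm (x - h) powr \<alpha>)"
proof -
  have "norm x \<le> norm (x - h) + norm h" by (metis diff_add_cancel norm_triangle_ineq)
  then have "norm x powr \<alpha> \<le> (norm (x - h) + norm h) powr \<alpha>" using al by (intro powr_mono2) auto
  also have "\<dots> \<le> norm (x - h) powr \<alpha> + norm h powr \<alpha>" using al by (intro powr_subadd) auto
  finally have "c * norm x powr \<alpha> \<le> c * (norm (x - h) powr \<alpha> + norm h powr \<alpha>)"
    using c by (intro mult_left_mono) auto
  then have "c * norm x powr \<alpha> \<le> c * norm h powr \<alpha> + c * norm (x - h) powr \<alpha>"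
    by (simp add: algebra_simps)
  then show ?thesis by (simp add: exp_add[symmetric])
qed

lemma seminorm_ge:
  fixes f :: "real^'n::finite \<Rightarrow> complex" and x :: "real^'n"
  assumes f: "schwartz f"
  shows "(1 + norm x) ^ N * cmod (f x) \<le> schwartz_seminorm N f"
proof -
  let ?S = "{(1 + norm y) ^ N * cmod (dlist is f y) | y is. length is \<le> N}"
  have "\<forall>is. \<exists>B. \<forall>x. (1 + norm x) ^ N * cmod (dlist is f x) \<le> B"
    using schwartz_bound[OF f] by blast
  then obtain B where B: "\<And>is x. (1 + norm x) ^ N * cmod (dlist is f x) \<le> B is" by metis
  define L where "L = {is. set is \<subseteq> (UNIV :: 'n set) \<and> length is \<le> N}"
  have L: "finite L" unfolding L_def by (rule finite_lists_length_le) simp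
  have "y \<le> (\<Sum>is\<in>L. \<bar>B is\<bar>)" if "y \<in> ?S" for y
  proof -
    from that obtain x "is" where y: "y = (1 + norm x) ^ N * cmod (dlist is f x)" "length is \<le> N" by blast
    have "is \<in> L" using y(2) unfolding L_def by simp
    then have "\<bar>B is\<bar> \<le> (\<Sum>is\<in>L. \<bar>B is\<bar>)" by (intro member_le_sum L) auto
    moreover have "(1 + norm x) ^ N * cmod (dlist is f x) \<le> B is" by (rule B)
    ultimately show ?thesis using y(1) by linarith
  qed
  then have bdd: "bdd_above ?S" by (rule bdd_aboveI)
  have "(1 + norm x) ^ N * cmod (dlist [] f x) \<in> ?S"
    by (rule CollectI, rule exI[of _ x], rule exI[of _ "[]"]) simp
  then show ?thesis unfolding schwartz_seminorm_def using cSup_upper[OF _ bdd] by simp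
qed

definition amul :: "real^'n::finite \<Rightarrow> (real^'n \<Rightarrow> complex) \<Rightarrow> complex" where
  "amul h \<psi> = (LINT \<xi>|lebesgue. \<psi> \<xi> * cis (- (h \<bullet> \<xi>)))"

lemma amul_lborel:
  fixes f :: "real^'n::finite \<Rightarrow> complex" and h :: "real^'n"
  assumes [measurable]: "f \<in> borel_measurable borel"
  shows "amul h f = (\<integral>\<xi>. f \<xi> * cis (- (h \<bullet> \<xi>)) \<partial>lborel)"
  unfolding amul_def by (rule integral_completion) measurable

lemma amul_tempered:
  fixes h :: "real^'n::finite"
  shows "tempered (amul h)"
  unfolding tempered_def
proof (intro conjI allI impI)
  fix f g :: "real^'n \<Rightarrow> complex" assume f: "schwartz f" and g: "schwartz g"
  have [measurable]: "f \<in> borel_measurable borel" "g \<in> borel_measurable borel"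
    using schwartz_measurable f g by auto
  have i1: "integrable lborel (\<lambda>\<xi>. f \<xi> * cis (- (h \<bullet> \<xi>)))"
    by (rule integrable_mult_cis) (auto intro: schwartz_integrable f)
  have i2: "integrable lborel (\<lambda>\<xi>. g \<xi> * cis (- (h \<bullet> \<xi>)))"
    by (rule integrable_mult_cis) (auto intro: schwartz_integrable g)
  show "amul h (\<lambda>x. f x + g x) = amul h f + amul h g"
    by (simp add: amul_lborel distrib_right Bochner_Integration.integral_add[OF i1 i2])
next
  fix f :: "real^'n \<Rightarrow> complex" and c assume f: "schwartz f"
  have [measurable]: "f \<in> borel_measurable borel" using schwartz_measurable f by auto
  show "amul h (\<lambda>x. c * f x) = c * amul h f"
    by (simp add: amul_lborel mult.assoc integral_mult_right_zero)
next
  define N where "N = 2 * CARD('n)"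
  have "cmod (amul h f) \<le> integral\<^sup>L lborel (Pw :: real^'n \<Rightarrow> real) * schwartz_seminorm N f" if f: "schwartz f" for f :: "real^'n \<Rightarrow> complex"
  proof -
    have [measurable]: "f \<in> borel_measurable borel" using schwartz_measurable f by auto
    define S where "S = schwartz_seminorm N f"
    have b: "cmod (f x) \<le> S * Pw x" for x
      by (rule decay_Pw) (use seminorm_ge[OF f] in \<open>auto simp: S_def N_def\<close>)
    have "cmod (amul h f) \<le> (\<integral>\<xi>. cmod (f \<xi> * cis (- (h \<bullet> \<xi>))) \<partial>lborel)"
      unfolding amul_lborel[OF \<open>f \<in> borel_measurable borel\<close>] by (rule integral_norm_bound)
    also have "\<dots> = (\<integral>\<xi>. cmod (f \<xi>) \<partial>lborel)" by (simp add: norm_mult)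
    also have "\<dots> \<le> (\<integral>\<xi>. S * Pw (\<xi>::real^'n) \<partial>lborel)"
      by (rule Bochner_Integration.integral_mono[OF integrable_norm[OF schwartz_integrable[OF f]] integrable_mult_right[OF Pw_integrable]]) (rule b)
    also have "\<dots> = integral\<^sup>L lborel (Pw :: real^'n \<Rightarrow> real) * S" by simp
    finally show ?thesis unfolding S_def .
  qed
  then show "\<exists>C N. \<forall>f. schwartz f \<longrightarrow> cmod (amul h f) \<le> C * schwartz_seminorm N f" by blast
qed

lemma gs_Gn: "(\<lambda>x. complex_of_real (Gn \<epsilon> x)) = gs (\<epsilon>\<^sup>2 / 2)"
  by (auto simp: fun_eq_iff Gn_eq gs_def power2_norm_eq_inner)

lemma Gn_zero: "Gn \<epsilon> 0 = 1" by (simp add: Gn_eq)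

lemma amul_gauss:
  fixes h :: "real^'n::finite" and \<epsilon> :: real
  assumes e: "\<epsilon> > 0"
  shows "amul h (\<lambda>x. complex_of_real (Gn \<epsilon> x)) = complex_of_real ((sqrt (2 * pi) / \<epsilon>) ^ CARD('n) * Gn (1 / \<epsilon>) (- h))"
    and "(LINT x|lebesgue. complex_of_real (Gn \<epsilon> (x::real^'n))) = complex_of_real ((sqrt (2 * pi) / \<epsilon>) ^ CARD('n))"
proof -
  have "amul h (\<lambda>x. complex_of_real (Gn \<epsilon> x)) = (\<integral>\<xi>. complex_of_real (Gn \<epsilon> \<xi>) * cis ((- h) \<bullet> \<xi>) \<partial>lborel)"
    by (subst amul_lborel) auto
  then show "amul h (\<lambda>x. complex_of_real (Gn \<epsilon> x)) = complex_of_real ((sqrt (2 * pi) / \<epsilon>) ^ CARD('n) * Gn (1 / \<epsilon>) (- h))"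
    using gauss_nd(2)[OF e, of "- h"] by simp
  have "(LINT x|lebesgue. complex_of_real (Gn \<epsilon> (x::real^'n))) = (\<integral>\<xi>. complex_of_real (Gn \<epsilon> \<xi>) * cis ((0::real^'n) \<bullet> \<xi>) \<partial>lborel)"
    by (subst integral_completion) auto
  then show "(LINT x|lebesgue. complex_of_real (Gn \<epsilon> (x::real^'n))) = complex_of_real ((sqrt (2 * pi) / \<epsilon>) ^ CARD('n))"
    using gauss_nd(2)[OF e, of "0 :: real^'n"] by (simp add: Gn_zero)
qed

lemma amul_nonconstant:
  fixes h :: "real^'n::finite"
  assumes h: "h \<noteq> 0"
  shows "\<not> constant_distribution (amul h)"
proof
  assume "constant_distribution (amul h)"
  then obtain k where k: "\<And>\<phi>. schwartz \<phi> \<Longrightarrow> amul h \<phi> = k * (LINT x|lebesgue. \<phi> x)"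
    unfolding constant_distribution_def by blast
  have kv: "k = complex_of_real (Gn (1 / \<epsilon>) (- h))" if e: "\<epsilon> > 0" for \<epsilon>
  proof -
    have s: "schwartz (\<lambda>x::real^'n. complex_of_real (Gn \<epsilon> x))"
      unfolding gs_Gn using e by (intro gs_schwartz) simp
    define K where "K = (sqrt (2 * pi) / \<epsilon>) ^ CARD('n)"
    have K: "K > 0" unfolding K_def using e by simp
    have "complex_of_real (K * Gn (1 / \<epsilon>) (- h)) = k * complex_of_real K"
      using k[OF s] amul_gauss(1)[OF e, of h] amul_gauss(2)[OF e, where 'n='n] unfolding K_def by simp
    then have "complex_of_real K * complex_of_real (Gn (1 / \<epsilon>) (- h)) = complex_of_real K * k"
      by (simp add: mult_ac)
    then show ?thesis using K by simp
  qed
  have "Gn 1 (- h) = Gn (1 / 2) (- h)"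
    using kv[of 1] kv[of 2] by simp
  then have "(norm h)\<^sup>2 / 2 = (norm h)\<^sup>2 / 8" by (simp add: Gn_eq power_divide)
  then have "norm h = 0" by simp
  then show False using h by simp
qed

lemma bfn_mono:
  assumes "banach_function_norm \<rho>" "f \<in> borel_measurable lebesgue" "g \<in> borel_measurable lebesgue"
    "\<And>x. g x \<le> f x"
  shows "\<rho> g \<le> \<rho> f"
  using assms unfolding banach_function_norm_def by blast

lemma bfn_homog:
  assumes "banach_function_norm \<rho>" "f \<in> borel_measurable lebesgue" "0 \<le> a"
  shows "\<rho> (\<lambda>x. ennreal a * f x) = ennreal a * \<rho> f"
  using assms unfolding banach_function_norm_def by blast

lemma rho_shift:
  fixes \<rho> :: "(real^'n::finite \<Rightarrow> ennreal) \<Rightarrow> ennreal" and u :: "real^'n \<Rightarrow> complex"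
  assumes bfn: "banach_function_norm \<rho>" and ti: "translation_invariant \<rho>"
    and wm[measurable]: "w \<in> borel_measurable borel" and wpos: "\<And>x. 0 \<le> w x"
    and wle: "\<And>x. w x \<le> K * w (x - h)" and K: "0 \<le> K"
    and um[measurable]: "u \<in> borel_measurable borel" and uY: "in_Yw \<rho> w u"
  shows "Ywnorm \<rho> w (\<lambda>x. u (x - h)) \<le> ennreal K * Ywnorm \<rho> w u"
    and "in_Yw \<rho> w (\<lambda>x. u (x - h))"
proof -
  define U where "U x = u x * complex_of_real (w x)" for x
  have UY: "in_Y \<rho> U" using uY unfolding in_Yw_def U_def by simp
  have shift: "Ynorm \<rho> (\<lambda>x. U (x - h)) = Ynorm \<rho> U"
    using ti UY unfolding translation_invariant_def by blast
  define F1 where "F1 x = ennreal (cmod (u (x - h) * complex_of_real (w x)))" for x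
  define F0 where "F0 x = ennreal (cmod (U (x - h)))" for x
  have m1: "F1 \<in> borel_measurable lebesgue" unfolding F1_def by (intro borel_lebesgue) measurable
  have m0: "F0 \<in> borel_measurable lebesgue" unfolding F0_def U_def by (intro borel_lebesgue) measurable
  have m2: "(\<lambda>x. ennreal K * F0 x) \<in> borel_measurable lebesgue" using m0 by measurable
  have le: "F1 x \<le> ennreal K * F0 x" for x
  proof -
    have "cmod (u (x - h) * complex_of_real (w x)) = cmod (u (x - h)) * w x"
      using wpos[of x] by (simp add: norm_mult)
    also have "\<dots> \<le> cmod (u (x - h)) * (K * w (x - h))" by (intro mult_left_mono wle) auto
    also have "\<dots> = K * cmod (U (x - h))" using wpos[of "x - h"] by (simp add: U_def norm_mult)
    finally show ?thesis unfolding F1_def F0_def using K by (simp add: ennreal_mult[symmetric] ennreal_leI)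
  qed
  have "Ywnorm \<rho> w (\<lambda>x. u (x - h)) = \<rho> F1" unfolding Ywnorm_def Ynorm_def F1_def ..
  also have "\<dots> \<le> \<rho> (\<lambda>x. ennreal K * F0 x)" by (rule bfn_mono[OF bfn m2 m1 le])
  also have "\<dots> = ennreal K * \<rho> F0" by (rule bfn_homog[OF bfn m0 K])
  also have "\<rho> F0 = Ywnorm \<rho> w u" using shift unfolding Ynorm_def Ywnorm_def F0_def U_def by simp
  finally show le2: "Ywnorm \<rho> w (\<lambda>x. u (x - h)) \<le> ennreal K * Ywnorm \<rho> w u" .
  have "Ywnorm \<rho> w u < \<infinity>" using uY unfolding in_Yw_def in_Y_def Ywnorm_def by simp
  then have "ennreal K * Ywnorm \<rho> w u < \<infinity>" by (simp add: ennreal_mult_less_top)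
  then have "Ywnorm \<rho> w (\<lambda>x. u (x - h)) < \<infinity>" using le2 by (rule le_less_trans[rotated])
  moreover have "(\<lambda>x. u (x - h) * complex_of_real (w x)) \<in> borel_measurable lebesgue"
    by (intro borel_lebesgue) measurable
  ultimately show "in_Yw \<rho> w (\<lambda>x. u (x - h))"
    unfolding in_Yw_def in_Y_def Ywnorm_def by simp
qed

lemma multiplier_represents:
  fixes u :: "real^'n::finite \<Rightarrow> complex" and h :: "real^'n"
  assumes u: "schwartz u"
  shows "represents (multiplier_op (amul h) u) (\<lambda>x. u (x - h))"
  unfolding represents_def
proof (intro conjI allI impI)
  have [measurable]: "u \<in> borel_measurable borel" using schwartz_measurable[OF u] .
  show "(\<lambda>x. u (x - h)) \<in> borel_measurable lebesgue" by (intro borel_lebesgue) measurable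
  fix \<phi> :: "real^'n \<Rightarrow> complex" assume f: "schwartz \<phi>"
  have [measurable]: "\<phi> \<in> borel_measurable borel" using schwartz_measurable[OF f] .
  obtain M where M: "\<And>y. cmod (u y) \<le> M" using schwartz_bound0[OF u] by blast
  have il: "integrable lborel (\<lambda>x. u (x - h) * \<phi> x)"
  proof (rule Bochner_Integration.integrable_bound[where f = "\<lambda>x. M * norm (\<phi> x)"])
    show "integrable lborel (\<lambda>x. M * norm (\<phi> x))"
      by (intro integrable_mult_right integrable_norm schwartz_integrable f)
    show "AE x in lborel. norm (u (x - h) * \<phi> x) \<le> norm (M * norm (\<phi> x))"
      by (intro always_eventually allI)
         (metis M abs_ge_self mult_right_mono norm_ge_zero norm_mult order_trans real_norm_def)
  qed measurable
  show "integrable lebesgue (\<lambda>x. u (x - h) * \<phi> x)"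
    using il by (subst integrable_completion) measurable
  have [measurable]: "fourier u \<in> borel_measurable borel" by (rule fourier_measurable) measurable
  have [measurable]: "inv_fourier \<phi> \<in> borel_measurable borel" using inv_fourier_integrable(2)[OF f] .
  have "multiplier_op (amul h) u \<phi> = amul h (\<lambda>\<xi>. fourier u \<xi> * inv_fourier \<phi> \<xi>)"
    unfolding multiplier_op_def ..
  also have "\<dots> = (\<integral>\<xi>. (fourier u \<xi> * inv_fourier \<phi> \<xi>) * cis (- (h \<bullet> \<xi>)) \<partial>lborel)"
    by (rule amul_lborel) measurable
  also have "\<dots> = (\<integral>x. u (x - h) * \<phi> x \<partial>lborel)" by (rule main_identity(2)[OF u f])
  also have "\<dots> = (LINT x|lebesgue. u (x - h) * \<phi> x)" by (rule integral_completion[symmetric]) measurable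
  finally show "multiplier_op (amul h) u \<phi> = (LINT x|lebesgue. u (x - h) * \<phi> x)" .
qed

theorem corollary8p5:
  fixes \<rho> :: "(real^'n::finite \<Rightarrow> ennreal) \<Rightarrow> ennreal" and c \<alpha> :: real
  assumes "c > 0" and "0 < \<alpha>" and "\<alpha> \<le> 1"
    and "banach_function_norm \<rho>" and "translation_invariant \<rho>"
  shows "\<exists>a. fourier_multiplier_Yw \<rho> (\<lambda>x. exp (c * norm x powr \<alpha>)) a \<and> \<not> constant_distribution a"
proof -
  define h :: "real^'n" where "h = axis undefined 1"
  have h0: "h \<noteq> 0" unfolding h_def by (simp add: axis_eq_0_iff)
  define w :: "real^'n \<Rightarrow> real" where "w x = exp (c * norm x powr \<alpha>)" for x
  define K where "K = exp (c * norm h powr \<alpha>)"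
  have wm: "w \<in> borel_measurable borel" unfolding w_def by measurable
  have wpos: "0 \<le> w x" for x unfolding w_def by simp
  have K0: "0 \<le> K" unfolding K_def by simp
  have wle: "w x \<le> K * w (x - h)" for x
    unfolding w_def K_def by (rule weight_shift) (use assms in auto)
  have "fourier_multiplier_Yw \<rho> w (amul h)"
    unfolding fourier_multiplier_Yw_def
  proof (intro conjI amul_tempered exI[of _ K] allI impI)
    fix u :: "real^'n \<Rightarrow> complex"
    assume u: "schwartz u \<and> in_Yw \<rho> w u \<and> (\<exists>x. u x \<noteq> 0)"
    have um: "u \<in> borel_measurable borel" using schwartz_measurable u by blast
    show "\<exists>g. in_Yw \<rho> w g \<and> represents (multiplier_op (amul h) u) g \<and> Ywnorm \<rho> w g \<le> ennreal K * Ywnorm \<rho> w u"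
    proof (intro exI[of _ "\<lambda>x. u (x - h)"] conjI)
      show "in_Yw \<rho> w (\<lambda>x. u (x - h))"
        by (rule rho_shift(2)[OF assms(4,5) wm wpos wle K0 um]) (use u in auto)
      show "Ywnorm \<rho> w (\<lambda>x. u (x - h)) \<le> ennreal K * Ywnorm \<rho> w u"
        by (rule rho_shift(1)[OF assms(4,5) wm wpos wle K0 um]) (use u in auto)
      show "represents (multiplier_op (amul h) u) (\<lambda>x. u (x - h))"
        using u by (intro multiplier_represents) auto
    qed
  qed
  then show ?thesis using amul_nonconstant[OF h0] unfolding w_def[abs_def] by blast
qed

end
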